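(* (a) Let $\alpha,\beta>0$, $\lambda\in\mathbb{R}$, $a,b>0$ with $-\min\{a,b\}<\frac{\lambda}{2}<\min\{a,b\}$. If $X\sim\mathrm{Be}'(\lambda,a,b;\alpha,1)$ and $Y\sim\mathrm{Be}'(-\lambda,a,b;\beta,1)$ are independent and $(U,V)=\tilde H_I^{\alpha,\beta}(X,Y)$, then $U,V$ are independent with $U\sim\mathrm{Be}'(\lambda,b,a;\alpha,1)$ and $V\sim\mathrm{Be}'(-\lambda,b,a;\beta,1)$. (b) Let $\delta>0$, $a,b>0$ and $0<\frac{\lambda}{2}<\min\{a,b\}$. If $X\sim\mathrm{Be}'(\lambda,a,b;\delta,1)$ and $Y\sim\mathrm{Be}'(b-\frac{\lambda}{2},\lambda)$ are independent and $(U,V)=F^{+,\delta}_{\mathrm{Be}}(X,Y)$, then $U,V$ are independent with $U\sim\mathrm{Be}'(\lambda,b,a;\delta,1)$ and $V\sim\mathrm{Be}'(a-\frac{\lambda}{2},\lambda)$.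
   Context: $\mathbb{R}_+=(0,\infty)$. For $p,q>0$ and $-b<\frac{\lambda}{2}<a$, $\mathrm{Be}'(\lambda,a,b;p,q)$ is the distribution on $\mathbb{R}_+$ with density proportional to $x^{\lambda-1}(1+px)^{-a-\frac{\lambda}{2}}(1+qx^{-1})^{-b+\frac{\lambda}{2}}$ (equivalently, $\mathrm{Be}'(\lambda,a,b;\delta,1)$ has density proportional to $x^{b+\frac{\lambda}{2}-1}(1+x)^{-b+\frac{\lambda}{2}}(1+\delta x)^{-a-\frac{\lambda}{2}}$). For $A,B>0$, $\mathrm{Be}'(A,B)$ is the Beta prime distribution with density proportional to $x^{A-1}(1+x)^{-A-B}$. $\tilde H_I^{\alpha,\beta}(x,y)=\left(\frac{1+x+y+\beta xy}{y(\beta+\alpha x+\beta y+\alpha\beta xy)},\ \frac{1+x+y+\alpha xy}{x(\alpha+\alpha x+\beta y+\alpha\beta xy)}\right)$ and $F^{+,\delta}_{\mathrm{Be}}(x,y)=\left(\frac{1+x+y}{\delta xy},\ \frac{1+x+y+\delta xy}{x(\delta+\delta x)}\right)$, maps $\mathbb{R}_+^2\to\mathbb{R}_+^2$. *)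

theory Defs
  imports "HOL-Probability.Probability"
begin

text \<open>Unnormalised density of the generalised Beta prime law Be'(lam,a,b;p,q) on (0,inf):
  x^(lam-1) (1+p x)^(-a-lam/2) (1+q/x)^(-b+lam/2) for x > 0, and 0 otherwise.\<close>
definition gbp_kernel :: "real \<Rightarrow> real \<Rightarrow> real \<Rightarrow> real \<Rightarrow> real \<Rightarrow> real \<Rightarrow> real" where
  "gbp_kernel lam a b p q x =
     (if 0 < x then x powr (lam - 1) * (1 + p * x) powr (- a - lam / 2)
                    * (1 + q / x) powr (- b + lam / 2) else 0)"

definition gbp_density :: "real \<Rightarrow> real \<Rightarrow> real \<Rightarrow> real \<Rightarrow> real \<Rightarrow> real \<Rightarrow> ennreal" where
  "gbp_density lam a b p q x =
     ennreal (gbp_kernel lam a b p q x / (\<integral>y. gbp_kernel lam a b p q y \<partial>lborel))"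

definition bp_kernel :: "real \<Rightarrow> real \<Rightarrow> real \<Rightarrow> real" where
  "bp_kernel A B x = (if 0 < x then x powr (A - 1) * (1 + x) powr (- A - B) else 0)"

definition bp_density :: "real \<Rightarrow> real \<Rightarrow> real \<Rightarrow> ennreal" where
  "bp_density A B x = ennreal (bp_kernel A B x / (\<integral>y. bp_kernel A B y \<partial>lborel))"

definition HI :: "real \<Rightarrow> real \<Rightarrow> real \<Rightarrow> real \<Rightarrow> real \<times> real" where
  "HI \<alpha> \<beta> x y =
     ((1 + x + y + \<beta> * x * y) / (y * (\<beta> + \<alpha> * x + \<beta> * y + \<alpha> * \<beta> * x * y)),
      (1 + x + y + \<alpha> * x * y) / (x * (\<alpha> + \<alpha> * x + \<beta> * y + \<alpha> * \<beta> * x * y)))"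

definition FBe :: "real \<Rightarrow> real \<Rightarrow> real \<Rightarrow> real \<times> real" where
  "FBe \<delta> x y =
     ((1 + x + y) / (\<delta> * x * y),
      (1 + x + y + \<delta> * x * y) / (x * (\<delta> + \<delta> * x)))"

end

theory Submission
  imports Defs
begin


lemma subst1:
  fixes g g' f :: "real \<Rightarrow> real" and S :: "real set"
  assumes S: "S \<in> sets lebesgue"
    and der: "\<And>y. y \<in> S \<Longrightarrow> (g has_field_derivative g' y) (at y within S)"
    and inj: "inj_on g S"
    and nn: "\<And>y. 0 \<le> f y"
    and m1: "(\<lambda>y. \<bar>g' y\<bar> * f (g y) * indicator S y) \<in> borel_measurable borel"
    and m2: "(\<lambda>y. f y * indicator (g ` S) y) \<in> borel_measurable borel"
  shows "(\<integral>\<^sup>+y. ennreal (\<bar>g' y\<bar> * f (g y)) * indicator S y \<partial>lborel)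
       = (\<integral>\<^sup>+v. ennreal (f v) * indicator (g ` S) v \<partial>lborel)"
proof -
  let ?L = "\<integral>\<^sup>+y. ennreal (\<bar>g' y\<bar> * f (g y)) * indicator S y \<partial>lborel"
  let ?R = "\<integral>\<^sup>+v. ennreal (f v) * indicator (g ` S) v \<partial>lborel"
  have L: "?L = \<integral>\<^sup>+y. ennreal (\<bar>g' y\<bar> * f (g y) * indicator S y) \<partial>lborel"
    by (intro nn_integral_cong) (auto simp: indicator_def)
  have R: "?R = \<integral>\<^sup>+y. ennreal (f y * indicator (g ` S) y) \<partial>lborel"
    by (intro nn_integral_cong) (auto simp: indicator_def)
  have nnL: "\<And>y. 0 \<le> \<bar>g' y\<bar> * f (g y) * indicator S y" using nn by auto
  have nnR: "\<And>y. 0 \<le> f y * indicator (g ` S) y" using nn by auto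
  have CV: "\<And>b. (\<lambda>x. \<bar>g' x\<bar> * f (g x)) absolutely_integrable_on S \<and>
           integral S (\<lambda>x. \<bar>g' x\<bar> * f (g x)) = b
     \<longleftrightarrow> f absolutely_integrable_on (g ` S) \<and> integral (g ` S) f = b"
    by (rule has_absolute_integral_change_of_variables_1'[OF S der inj])
  have A: "?L = ?R" if fin: "?R < \<infinity>"
  proof -
    obtain r where r: "?R = ennreal r" "0 \<le> r" using fin by (cases ?R rule: ennreal_cases) auto
    have "((\<lambda>y. f y * indicator (g ` S) y) has_integral r) UNIV"
      using r m2 nnR by (subst has_integral_iff_nn_integral_lebesgue) (auto simp: R nn_integral_completion measurable_completion)
    moreover have "(\<lambda>y. f y * indicator (g ` S) y) = (\<lambda>y. if y \<in> g ` S then f y else 0)"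
      by (auto simp: indicator_def)
    ultimately have "(f has_integral r) (g ` S)"
      using has_integral_restrict_UNIV[of "g ` S" f r] by simp
    then have "f absolutely_integrable_on (g ` S) \<and> integral (g ` S) f = r"
      using nn nonnegative_absolutely_integrable_1 has_integral_integrable integral_unique by blast
    then have "(\<lambda>x. \<bar>g' x\<bar> * f (g x)) absolutely_integrable_on S \<and>
           integral S (\<lambda>x. \<bar>g' x\<bar> * f (g x)) = r" using CV by blast
    then have "((\<lambda>x. \<bar>g' x\<bar> * f (g x)) has_integral r) S"
      using set_lebesgue_integral_eq_integral(1) has_integral_integral by fastforce
    then have "?L = ennreal r" using nn
      by (intro nn_integral_has_integral_lebesgue') auto
    then show ?thesis using r by simp
  qed
  have B: "?L = ?R" if fin: "?L < \<infinity>"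
  proof -
    obtain r where r: "?L = ennreal r" "0 \<le> r" using fin by (cases ?L rule: ennreal_cases) auto
    have "((\<lambda>y. \<bar>g' y\<bar> * f (g y) * indicator S y) has_integral r) UNIV"
      using r m1 nnL by (subst has_integral_iff_nn_integral_lebesgue) (auto simp: L nn_integral_completion measurable_completion)
    moreover have "(\<lambda>y. \<bar>g' y\<bar> * f (g y) * indicator S y) = (\<lambda>y. if y \<in> S then \<bar>g' y\<bar> * f (g y) else 0)"
      by (auto simp: indicator_def)
    ultimately have h: "((\<lambda>x. \<bar>g' x\<bar> * f (g x)) has_integral r) S"
      using has_integral_restrict_UNIV[of S "\<lambda>x. \<bar>g' x\<bar> * f (g x)" r] by simp
    have "(\<lambda>x. \<bar>g' x\<bar> * f (g x)) absolutely_integrable_on S \<and> integral S (\<lambda>x. \<bar>g' x\<bar> * f (g x)) = r"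
      proof
        show "(\<lambda>x. \<bar>g' x\<bar> * f (g x)) absolutely_integrable_on S"
          by (rule nonnegative_absolutely_integrable_1[OF has_integral_integrable[OF h]]) (simp add: nn)
        show "integral S (\<lambda>x. \<bar>g' x\<bar> * f (g x)) = r" by (rule integral_unique[OF h])
      qed
    then have "f absolutely_integrable_on (g ` S) \<and> integral (g ` S) f = r" using CV by blast
    then have "(f has_integral r) (g ` S)"
      using set_lebesgue_integral_eq_integral(1) has_integral_integral by fastforce
    then have "?R = ennreal r" using nn
      by (intro nn_integral_has_integral_lebesgue') auto
    then show ?thesis using r by simp
  qed
  show ?thesis
  proof (cases "?R < \<infinity>")
    case True then show ?thesis using A by blast
  next
    case False
    show ?thesis
    proof (cases "?L < \<infinity>")
      case True then show ?thesis using B by blast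
    next
      case F2: False
      from False F2 show ?thesis by (simp add: less_top[symmetric])
    qed
  qed
qed

lemma slice_sets:
  assumes "A \<in> sets (borel :: (real \<times> real) measure)"
  shows "{y. (x, y) \<in> A} \<in> sets lebesgue" "{y. (y, x) \<in> A} \<in> sets lebesgue"
proof -
  have A': "A \<in> sets (borel \<Otimes>\<^sub>M borel)" using assms by (simp only: borel_prod)
  have "Pair x -` A \<in> sets borel" using sets_Pair1[OF A'] by simp
  moreover have "{y. (x, y) \<in> A} = Pair x -` A" by auto
  ultimately show "{y. (x, y) \<in> A} \<in> sets lebesgue" by (simp add: sets_completionI_sets)
  have "(\<lambda>y. (y, x)) -` A \<in> sets borel" using sets_Pair2[OF A'] by simp
  moreover have "{y. (y, x) \<in> A} = (\<lambda>y. (y, x)) -` A" by auto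
  ultimately show "{y. (y, x) \<in> A} \<in> sets lebesgue" by (simp add: sets_completionI_sets)
qed

lemma step_snd:
  fixes G G' :: "real \<Rightarrow> real \<Rightarrow> real" and A B :: "(real \<times> real) set" and \<phi> :: "real \<times> real \<Rightarrow> real"
  assumes A[measurable]: "A \<in> sets borel" and B[measurable]: "B \<in> sets borel"
    and nn: "\<And>z. 0 \<le> \<phi> z"
    and m\<phi>[measurable]: "\<phi> \<in> borel_measurable borel"
    and mL[measurable]: "(\<lambda>z. \<phi> (fst z, G (fst z) (snd z)) * \<bar>G' (fst z) (snd z)\<bar>) \<in> borel_measurable borel"
    and der: "\<And>x y. (x, y) \<in> A \<Longrightarrow> (G x has_real_derivative G' x y) (at y within {y. (x, y) \<in> A})"
    and inj: "\<And>x. inj_on (G x) {y. (x, y) \<in> A}"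
    and img: "\<And>x. G x ` {y. (x, y) \<in> A} = {v. (x, v) \<in> B}"
  shows "(\<integral>\<^sup>+z. ennreal (\<phi> (fst z, G (fst z) (snd z)) * \<bar>G' (fst z) (snd z)\<bar>) * indicator A z \<partial>(lborel \<Otimes>\<^sub>M lborel))
       = (\<integral>\<^sup>+z. ennreal (\<phi> z) * indicator B z \<partial>(lborel \<Otimes>\<^sub>M lborel))"
proof -
  have m1: "(\<lambda>z. ennreal (\<phi> (fst z, G (fst z) (snd z)) * \<bar>G' (fst z) (snd z)\<bar>) * indicator A z) \<in> borel_measurable (lborel \<Otimes>\<^sub>M lborel)"
    by (simp add: lborel_prod)
  have m2: "(\<lambda>z. ennreal (\<phi> z) * indicator B z) \<in> borel_measurable (lborel \<Otimes>\<^sub>M lborel)"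
    by (simp add: lborel_prod)
  have inner: "(\<integral>\<^sup>+y. ennreal (\<phi> (x, G x y) * \<bar>G' x y\<bar>) * indicator A (x, y) \<partial>lborel)
       = (\<integral>\<^sup>+y. ennreal (\<phi> (x, y)) * indicator B (x, y) \<partial>lborel)" for x
  proof -
    let ?S = "{y. (x, y) \<in> A}"
    have "(\<lambda>y. \<bar>G' x y\<bar> * \<phi> (x, G x y) * indicator A (x, y)) \<in> borel_measurable borel"
    proof -
      have "(\<lambda>y. \<phi> (fst (x, y), G (fst (x, y)) (snd (x, y))) * \<bar>G' (fst (x, y)) (snd (x, y))\<bar> * indicator A (x, y)) \<in> borel_measurable borel"
        by measurable
      then show ?thesis by (simp add: mult.commute mult.left_commute)
    qed
    moreover have "(\<lambda>y. \<bar>G' x y\<bar> * \<phi> (x, G x y) * indicator A (x, y)) = (\<lambda>y. \<bar>G' x y\<bar> * \<phi> (x, G x y) * indicator ?S y)"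
      by (auto simp: indicator_def)
    ultimately have M1: "(\<lambda>y. \<bar>G' x y\<bar> * \<phi> (x, G x y) * indicator ?S y) \<in> borel_measurable borel" by simp
    have "(\<lambda>y. \<phi> (x, y) * indicator B (x, y)) \<in> borel_measurable borel" by measurable
    moreover have "(\<lambda>y. \<phi> (x, y) * indicator B (x, y)) = (\<lambda>y. \<phi> (x, y) * indicator (G x ` ?S) y)"
      by (auto simp: indicator_def img)
    ultimately have M2: "(\<lambda>y. \<phi> (x, y) * indicator (G x ` ?S) y) \<in> borel_measurable borel" by simp
    have "(\<integral>\<^sup>+y. ennreal (\<bar>G' x y\<bar> * \<phi> (x, G x y)) * indicator ?S y \<partial>lborel)
       = (\<integral>\<^sup>+v. ennreal (\<phi> (x, v)) * indicator (G x ` ?S) v \<partial>lborel)"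
      by (rule subst1[OF slice_sets(1)[OF A] der inj _ M1 M2]) (auto simp: nn)
    moreover have "(\<integral>\<^sup>+y. ennreal (\<phi> (x, G x y) * \<bar>G' x y\<bar>) * indicator A (x, y) \<partial>lborel)
        = (\<integral>\<^sup>+y. ennreal (\<bar>G' x y\<bar> * \<phi> (x, G x y)) * indicator ?S y \<partial>lborel)"
      by (intro nn_integral_cong) (auto simp: indicator_def mult.commute)
    moreover have "(\<integral>\<^sup>+y. ennreal (\<phi> (x, y)) * indicator B (x, y) \<partial>lborel)
        = (\<integral>\<^sup>+v. ennreal (\<phi> (x, v)) * indicator (G x ` ?S) v \<partial>lborel)"
      by (intro nn_integral_cong) (auto simp: indicator_def img)
    ultimately show ?thesis by simp
  qed
  have "(\<integral>\<^sup>+z. ennreal (\<phi> (fst z, G (fst z) (snd z)) * \<bar>G' (fst z) (snd z)\<bar>) * indicator A z \<partial>(lborel \<Otimes>\<^sub>M lborel))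
     = (\<integral>\<^sup>+x. \<integral>\<^sup>+y. ennreal (\<phi> (x, G x y) * \<bar>G' x y\<bar>) * indicator A (x, y) \<partial>lborel \<partial>lborel)"
    using lborel.nn_integral_fst[OF m1] by simp
  also have "\<dots> = (\<integral>\<^sup>+x. \<integral>\<^sup>+y. ennreal (\<phi> (x, y)) * indicator B (x, y) \<partial>lborel \<partial>lborel)"
    by (simp add: inner)
  also have "\<dots> = (\<integral>\<^sup>+z. ennreal (\<phi> z) * indicator B z \<partial>(lborel \<Otimes>\<^sub>M lborel))"
    using lborel.nn_integral_fst[OF m2] by simp
  finally show ?thesis .
qed

lemma step_fst:
  fixes G G' :: "real \<Rightarrow> real \<Rightarrow> real" and A B :: "(real \<times> real) set" and \<phi> :: "real \<times> real \<Rightarrow> real"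
  assumes A[measurable]: "A \<in> sets borel" and B[measurable]: "B \<in> sets borel"
    and nn: "\<And>z. 0 \<le> \<phi> z"
    and m\<phi>[measurable]: "\<phi> \<in> borel_measurable borel"
    and mL[measurable]: "(\<lambda>z. \<phi> (G (snd z) (fst z), snd z) * \<bar>G' (snd z) (fst z)\<bar>) \<in> borel_measurable borel"
    and der: "\<And>x y. (x, y) \<in> A \<Longrightarrow> (G y has_real_derivative G' y x) (at x within {x. (x, y) \<in> A})"
    and inj: "\<And>y. inj_on (G y) {x. (x, y) \<in> A}"
    and img: "\<And>y. G y ` {x. (x, y) \<in> A} = {u. (u, y) \<in> B}"
  shows "(\<integral>\<^sup>+z. ennreal (\<phi> (G (snd z) (fst z), snd z) * \<bar>G' (snd z) (fst z)\<bar>) * indicator A z \<partial>(lborel \<Otimes>\<^sub>M lborel))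
       = (\<integral>\<^sup>+z. ennreal (\<phi> z) * indicator B z \<partial>(lborel \<Otimes>\<^sub>M lborel))"
proof -
  have m1: "(\<lambda>z. ennreal (\<phi> (G (snd z) (fst z), snd z) * \<bar>G' (snd z) (fst z)\<bar>) * indicator A z) \<in> borel_measurable (lborel \<Otimes>\<^sub>M lborel)"
    by (simp add: lborel_prod)
  have m2: "(\<lambda>z. ennreal (\<phi> z) * indicator B z) \<in> borel_measurable (lborel \<Otimes>\<^sub>M lborel)"
    by (simp add: lborel_prod)
  have inner: "(\<integral>\<^sup>+x. ennreal (\<phi> (G y x, y) * \<bar>G' y x\<bar>) * indicator A (x, y) \<partial>lborel)
       = (\<integral>\<^sup>+x. ennreal (\<phi> (x, y)) * indicator B (x, y) \<partial>lborel)" for y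
  proof -
    let ?S = "{x. (x, y) \<in> A}"
    have "(\<lambda>x. \<bar>G' y x\<bar> * \<phi> (G y x, y) * indicator A (x, y)) \<in> borel_measurable borel"
    proof -
      have "(\<lambda>x. \<phi> (G (snd (x, y)) (fst (x, y)), snd (x, y)) * \<bar>G' (snd (x, y)) (fst (x, y))\<bar> * indicator A (x, y)) \<in> borel_measurable borel"
        by measurable
      then show ?thesis by (simp add: mult.commute mult.left_commute)
    qed
    moreover have "(\<lambda>x. \<bar>G' y x\<bar> * \<phi> (G y x, y) * indicator A (x, y)) = (\<lambda>x. \<bar>G' y x\<bar> * \<phi> (G y x, y) * indicator ?S x)"
      by (auto simp: indicator_def)
    ultimately have M1: "(\<lambda>x. \<bar>G' y x\<bar> * \<phi> (G y x, y) * indicator ?S x) \<in> borel_measurable borel" by simp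
    have "(\<lambda>x. \<phi> (x, y) * indicator B (x, y)) \<in> borel_measurable borel" by measurable
    moreover have "(\<lambda>x. \<phi> (x, y) * indicator B (x, y)) = (\<lambda>x. \<phi> (x, y) * indicator (G y ` ?S) x)"
      by (auto simp: indicator_def img)
    ultimately have M2: "(\<lambda>x. \<phi> (x, y) * indicator (G y ` ?S) x) \<in> borel_measurable borel" by simp
    have "(\<integral>\<^sup>+x. ennreal (\<bar>G' y x\<bar> * \<phi> (G y x, y)) * indicator ?S x \<partial>lborel)
       = (\<integral>\<^sup>+u. ennreal (\<phi> (u, y)) * indicator (G y ` ?S) u \<partial>lborel)"
      by (rule subst1[OF slice_sets(2)[OF A] der inj _ M1 M2]) (auto simp: nn)
    moreover have "(\<integral>\<^sup>+x. ennreal (\<phi> (G y x, y) * \<bar>G' y x\<bar>) * indicator A (x, y) \<partial>lborel)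
        = (\<integral>\<^sup>+x. ennreal (\<bar>G' y x\<bar> * \<phi> (G y x, y)) * indicator ?S x \<partial>lborel)"
      by (intro nn_integral_cong) (auto simp: indicator_def mult.commute)
    moreover have "(\<integral>\<^sup>+x. ennreal (\<phi> (x, y)) * indicator B (x, y) \<partial>lborel)
        = (\<integral>\<^sup>+u. ennreal (\<phi> (u, y)) * indicator (G y ` ?S) u \<partial>lborel)"
      by (intro nn_integral_cong) (auto simp: indicator_def img)
    ultimately show ?thesis by simp
  qed
  have "(\<integral>\<^sup>+z. ennreal (\<phi> (G (snd z) (fst z), snd z) * \<bar>G' (snd z) (fst z)\<bar>) * indicator A z \<partial>(lborel \<Otimes>\<^sub>M lborel))
     = (\<integral>\<^sup>+y. \<integral>\<^sup>+x. ennreal (\<phi> (G y x, y) * \<bar>G' y x\<bar>) * indicator A (x, y) \<partial>lborel \<partial>lborel)"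
    using lborel_pair.nn_integral_snd[OF m1] by simp
  also have "\<dots> = (\<integral>\<^sup>+y. \<integral>\<^sup>+x. ennreal (\<phi> (x, y)) * indicator B (x, y) \<partial>lborel \<partial>lborel)"
    by (simp add: inner)
  also have "\<dots> = (\<integral>\<^sup>+z. ennreal (\<phi> z) * indicator B z \<partial>(lborel \<Otimes>\<^sub>M lborel))"
    using lborel_pair.nn_integral_snd[OF m2] by simp
  finally show ?thesis .
qed



lemma distr_borel_lborel: "distr M borel f = distr M lborel f"
  by (simp add: distr_def)

lemma distr_target_cong: "sets A = sets B \<Longrightarrow> space A = space B \<Longrightarrow> distr M A f = distr M B f"
  by (simp add: distr_def)

lemma ennreal_pos_normalizer:
  fixes K :: "real \<Rightarrow> real"
  assumes P: "prob_space N" and D: "N = density lborel (\<lambda>x. ennreal (K x / (\<integral>y. K y \<partial>lborel)))"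
    and nn: "\<And>x. 0 \<le> K x"
  shows "0 < (\<integral>y. K y \<partial>lborel)"
proof -
  have ge: "0 \<le> (\<integral>y. K y \<partial>lborel)" using nn by (simp add: integral_nonneg)
  show ?thesis
  proof (rule ccontr)
    assume "\<not> ?thesis"
    then have z: "(\<integral>y. K y \<partial>lborel) = 0" using ge by simp
    then have "N = density lborel (\<lambda>x. 0)" using D by simp
    then have "emeasure N (space N) = 0" by (simp add: emeasure_density)
    then show False using prob_space.emeasure_space_1[OF P] by simp
  qed
qed

lemma nn_integral_prod_split:
  fixes KU KV :: "real \<Rightarrow> real"
  assumes [measurable]: "KU \<in> borel_measurable borel" "KV \<in> borel_measurable borel"
    and nn: "\<And>x. 0 \<le> KU x" "\<And>x. 0 \<le> KV x"
  shows "(\<integral>\<^sup>+z. ennreal (KU (fst z) * KV (snd z)) \<partial>(lborel \<Otimes>\<^sub>M lborel))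
       = (\<integral>\<^sup>+u. ennreal (KU u) \<partial>lborel) * (\<integral>\<^sup>+v. ennreal (KV v) \<partial>lborel)"
proof -
  have m: "(\<lambda>z. ennreal (KU (fst z)) * ennreal (KV (snd z))) \<in> borel_measurable (lborel \<Otimes>\<^sub>M lborel)"
  proof -
    have [measurable]: "KU \<in> borel_measurable lborel" "KV \<in> borel_measurable lborel" by simp_all
    show ?thesis by measurable
  qed
  have "(\<integral>\<^sup>+z. ennreal (KU (fst z) * KV (snd z)) \<partial>(lborel \<Otimes>\<^sub>M lborel))
      = (\<integral>\<^sup>+z. ennreal (KU (fst z)) * ennreal (KV (snd z)) \<partial>(lborel \<Otimes>\<^sub>M lborel))"
    by (simp add: ennreal_mult nn)
  also have "\<dots> = (\<integral>\<^sup>+u. \<integral>\<^sup>+v. ennreal (KU u) * ennreal (KV v) \<partial>lborel \<partial>lborel)"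
    using lborel.nn_integral_fst[OF m] by simp
  also have "\<dots> = (\<integral>\<^sup>+u. ennreal (KU u) * (\<integral>\<^sup>+v. ennreal (KV v) \<partial>lborel) \<partial>lborel)"
    by (simp add: nn_integral_cmult)
  also have "\<dots> = (\<integral>\<^sup>+u. ennreal (KU u) \<partial>lborel) * (\<integral>\<^sup>+v. ennreal (KV v) \<partial>lborel)"
    by (simp add: nn_integral_multc)
  finally show ?thesis .
qed

lemma glue:
  fixes M :: "'s measure" and KX KY KU KV :: "real \<Rightarrow> real" and T :: "real \<times> real \<Rightarrow> real \<times> real"
    and X Y :: "'s \<Rightarrow> real"
  assumes P: "prob_space M"
    and nnX: "\<And>x. 0 \<le> KX x" and nnY: "\<And>x. 0 \<le> KY x" and nnU: "\<And>x. 0 \<le> KU x" and nnV: "\<And>x. 0 \<le> KV x"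
    and mX[measurable]: "KX \<in> borel_measurable borel" and mY[measurable]: "KY \<in> borel_measurable borel"
    and mU[measurable]: "KU \<in> borel_measurable borel" and mV[measurable]: "KV \<in> borel_measurable borel"
    and mT[measurable]: "T \<in> borel_measurable borel"
    and X: "distributed M lborel X (\<lambda>x. ennreal (KX x / (\<integral>y. KX y \<partial>lborel)))"
    and Y: "distributed M lborel Y (\<lambda>x. ennreal (KY x / (\<integral>y. KY y \<partial>lborel)))"
    and ind: "prob_space.indep_var M borel X borel Y"
    and key: "\<And>C. C \<in> sets (borel :: (real \<times> real) measure) \<Longrightarrow>
       (\<integral>\<^sup>+z. ennreal (KX (fst z) * KY (snd z)) * indicator C (T z) \<partial>(lborel \<Otimes>\<^sub>M lborel))
     = (\<integral>\<^sup>+z. ennreal (KU (fst z) * KV (snd z)) * indicator C z \<partial>(lborel \<Otimes>\<^sub>M lborel))"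
  shows "prob_space.indep_var M borel (\<lambda>\<omega>. fst (T (X \<omega>, Y \<omega>))) borel (\<lambda>\<omega>. snd (T (X \<omega>, Y \<omega>))) \<and>
         distributed M lborel (\<lambda>\<omega>. fst (T (X \<omega>, Y \<omega>))) (\<lambda>x. ennreal (KU x / (\<integral>y. KU y \<partial>lborel))) \<and>
         distributed M lborel (\<lambda>\<omega>. snd (T (X \<omega>, Y \<omega>))) (\<lambda>x. ennreal (KV x / (\<integral>y. KV y \<partial>lborel)))"
proof -
  interpret prob_space M by (rule P)
  define ZX where "ZX = (\<integral>y. KX y \<partial>lborel)"
  define ZY where "ZY = (\<integral>y. KY y \<partial>lborel)"
  define ZU where "ZU = (\<integral>y. KU y \<partial>lborel)"
  define ZV where "ZV = (\<integral>y. KV y \<partial>lborel)"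
  define fX where "fX = (\<lambda>x. ennreal (KX x / ZX))"
  define fY where "fY = (\<lambda>x. ennreal (KY x / ZY))"
  define fU where "fU = (\<lambda>x. ennreal (KU x / ZU))"
  define fV where "fV = (\<lambda>x. ennreal (KV x / ZV))"
  have Xd: "distr M lborel X = density lborel fX" and Xm[measurable]: "X \<in> measurable M borel"
    using X by (auto simp: distributed_def fX_def ZX_def)
  have Yd: "distr M lborel Y = density lborel fY" and Ym[measurable]: "Y \<in> measurable M borel"
    using Y by (auto simp: distributed_def fY_def ZY_def)
  have PX: "prob_space (density lborel fX)"
  proof -
    have "prob_space (distr M lborel X)" by (rule prob_space_distr) simp
    then show ?thesis by (simp add: Xd)
  qed
  have PY: "prob_space (density lborel fY)"
  proof -
    have "prob_space (distr M lborel Y)" by (rule prob_space_distr) simp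
    then show ?thesis by (simp add: Yd)
  qed
  have ZXpos: "0 < ZX"
    unfolding ZX_def by (rule ennreal_pos_normalizer[OF _ _ nnX]) (use PX in \<open>simp_all add: fX_def ZX_def\<close>)
  have ZYpos: "0 < ZY"
    unfolding ZY_def by (rule ennreal_pos_normalizer[OF _ _ nnY]) (use PY in \<open>simp_all add: fY_def ZY_def\<close>)
  have [measurable]: "fX \<in> borel_measurable borel" "fY \<in> borel_measurable borel" by (simp_all add: fX_def fY_def)
  interpret DX: prob_space "density lborel fX" by (rule PX)
  interpret DY: prob_space "density lborel fY" by (rule PY)
  have J: "distr M (borel \<Otimes>\<^sub>M borel) (\<lambda>\<omega>. (X \<omega>, Y \<omega>)) = density (lborel \<Otimes>\<^sub>M lborel) (\<lambda>(x, y). fX x * fY y)"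
  proof -
    have "distr M (borel \<Otimes>\<^sub>M borel) (\<lambda>\<omega>. (X \<omega>, Y \<omega>)) = distr M borel X \<Otimes>\<^sub>M distr M borel Y"
      using ind by (simp add: indep_var_distribution_eq)
    also have "\<dots> = density lborel fX \<Otimes>\<^sub>M density lborel fY"
      by (simp add: distr_borel_lborel Xd Yd)
    also have "\<dots> = density (lborel \<Otimes>\<^sub>M lborel) (\<lambda>(x, y). fX x * fY y)"
      by (rule pair_measure_density) (auto intro: sigma_finite_lborel DY.sigma_finite_measure_axioms)
    finally show ?thesis .
  qed
  define h2 where "h2 = (\<lambda>z::real\<times>real. ennreal (1 / (ZX * ZY)) * ennreal (KU (fst z) * KV (snd z)))"
  have [measurable]: "h2 \<in> borel_measurable (lborel \<Otimes>\<^sub>M lborel)"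
  proof -
    have [measurable]: "KU \<in> borel_measurable lborel" "KV \<in> borel_measurable lborel" by simp_all
    show ?thesis unfolding h2_def by measurable
  qed
  have mT2[measurable]: "T \<in> measurable (borel \<Otimes>\<^sub>M borel) (borel \<Otimes>\<^sub>M borel)"
    using mT by (simp add: borel_prod)
  have mT3: "T \<in> measurable (lborel \<Otimes>\<^sub>M lborel) (borel \<Otimes>\<^sub>M borel)"
    using mT2 by (simp add: measurable_def space_pair_measure sets_pair_measure_cong[OF sets_lborel sets_lborel])
  have UV: "distr M (borel \<Otimes>\<^sub>M borel) (\<lambda>\<omega>. T (X \<omega>, Y \<omega>)) = density (lborel \<Otimes>\<^sub>M lborel) h2"
  proof -
    have "distr M (borel \<Otimes>\<^sub>M borel) (\<lambda>\<omega>. T (X \<omega>, Y \<omega>)) =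
          distr (distr M (borel \<Otimes>\<^sub>M borel) (\<lambda>\<omega>. (X \<omega>, Y \<omega>))) (borel \<Otimes>\<^sub>M borel) T"
      by (subst distr_distr) (auto simp: comp_def)
    also have "\<dots> = distr (density (lborel \<Otimes>\<^sub>M lborel) (\<lambda>(x, y). fX x * fY y)) (borel \<Otimes>\<^sub>M borel) T"
      by (simp add: J)
    also have "\<dots> = density (lborel \<Otimes>\<^sub>M lborel) h2"
    proof (rule measure_eqI)
      show "sets (distr (density (lborel \<Otimes>\<^sub>M lborel) (\<lambda>(x, y). fX x * fY y)) (borel \<Otimes>\<^sub>M borel) T) =
            sets (density (lborel \<Otimes>\<^sub>M lborel) h2)"
        by (simp add: sets_pair_measure_cong[OF sets_lborel sets_lborel])
      fix C assume "C \<in> sets (distr (density (lborel \<Otimes>\<^sub>M lborel) (\<lambda>(x, y). fX x * fY y)) (borel \<Otimes>\<^sub>M borel) T)"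
      then have C2: "C \<in> sets (borel \<Otimes>\<^sub>M borel)" by simp
      then have C: "C \<in> sets (borel :: (real \<times> real) measure)" by (simp only: borel_prod)
      have Cl: "C \<in> sets (lborel \<Otimes>\<^sub>M lborel)" using C2 by (simp add: sets_pair_measure_cong[OF sets_lborel sets_lborel])
      have mfx: "(\<lambda>(x, y). fX x * fY y) \<in> borel_measurable (lborel \<Otimes>\<^sub>M lborel)"
      proof -
        have [measurable]: "fX \<in> borel_measurable lborel" "fY \<in> borel_measurable lborel" by simp_all
        show ?thesis by measurable
      qed
      have "emeasure (distr (density (lborel \<Otimes>\<^sub>M lborel) (\<lambda>(x, y). fX x * fY y)) (borel \<Otimes>\<^sub>M borel) T) C
          = emeasure (density (lborel \<Otimes>\<^sub>M lborel) (\<lambda>(x, y). fX x * fY y)) (T -` C \<inter> space (lborel \<Otimes>\<^sub>M lborel))"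
      proof -
        have "T \<in> measurable (density (lborel \<Otimes>\<^sub>M lborel) (\<lambda>(x, y). fX x * fY y)) (borel \<Otimes>\<^sub>M borel)"
          using mT3 by (simp add: measurable_cong_sets[OF sets_density refl])
        from emeasure_distr[OF this C2] show ?thesis by simp
      qed
      also have "\<dots> = (\<integral>\<^sup>+z. (case z of (x, y) \<Rightarrow> fX x * fY y) * indicator (T -` C \<inter> space (lborel \<Otimes>\<^sub>M lborel)) z \<partial>(lborel \<Otimes>\<^sub>M lborel))"
      proof -
        have pre: "T -` C \<inter> space (lborel \<Otimes>\<^sub>M lborel) \<in> sets (borel \<Otimes>\<^sub>M borel)"
          using measurable_sets[OF mT2 C2] by (simp add: space_pair_measure)
        show ?thesis by (rule emeasure_density[OF mfx]) (use pre in \<open>simp add: sets_pair_measure_cong[OF sets_lborel sets_lborel]\<close>)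
      qed
      also have "\<dots> = (\<integral>\<^sup>+z. ennreal (1 / (ZX * ZY)) * (ennreal (KX (fst z) * KY (snd z)) * indicator C (T z)) \<partial>(lborel \<Otimes>\<^sub>M lborel))"
      proof (intro nn_integral_cong)
        fix z :: "real \<times> real"
        have "fX (fst z) * fY (snd z) = ennreal (1 / (ZX * ZY)) * ennreal (KX (fst z) * KY (snd z))"
          using ZXpos ZYpos nnX nnY by (simp add: fX_def fY_def ennreal_mult[symmetric] field_simps)
        then show "(case z of (x, y) \<Rightarrow> fX x * fY y) * indicator (T -` C \<inter> space (lborel \<Otimes>\<^sub>M lborel)) z =
           ennreal (1 / (ZX * ZY)) * (ennreal (KX (fst z) * KY (snd z)) * indicator C (T z))"
          by (cases z) (simp add: space_pair_measure indicator_def mult.assoc)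
      qed
      also have "\<dots> = ennreal (1 / (ZX * ZY)) * (\<integral>\<^sup>+z. ennreal (KX (fst z) * KY (snd z)) * indicator C (T z) \<partial>(lborel \<Otimes>\<^sub>M lborel))"
      proof (rule nn_integral_cmult)
        have [measurable]: "KX \<in> borel_measurable lborel" "KY \<in> borel_measurable lborel" by simp_all
        show "(\<lambda>z. ennreal (KX (fst z) * KY (snd z)) * indicator C (T z)) \<in> borel_measurable (lborel \<Otimes>\<^sub>M lborel)"
          using mT3 C2 by measurable
      qed
      also have "\<dots> = ennreal (1 / (ZX * ZY)) * (\<integral>\<^sup>+z. ennreal (KU (fst z) * KV (snd z)) * indicator C z \<partial>(lborel \<Otimes>\<^sub>M lborel))"
        by (simp add: key[OF C])
      also have "\<dots> = (\<integral>\<^sup>+z. h2 z * indicator C z \<partial>(lborel \<Otimes>\<^sub>M lborel))"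
      proof -
        have [measurable]: "KU \<in> borel_measurable lborel" "KV \<in> borel_measurable lborel" by simp_all
        have "(\<lambda>z. ennreal (KU (fst z) * KV (snd z)) * indicator C z) \<in> borel_measurable (lborel \<Otimes>\<^sub>M lborel)"
          using Cl by measurable
        then show ?thesis by (simp add: nn_integral_cmult[symmetric] h2_def mult.assoc)
      qed
      also have "\<dots> = emeasure (density (lborel \<Otimes>\<^sub>M lborel) h2) C"
        by (rule emeasure_density[symmetric]) (use Cl in auto)
      finally show "emeasure (distr (density (lborel \<Otimes>\<^sub>M lborel) (\<lambda>(x, y). fX x * fY y)) (borel \<Otimes>\<^sub>M borel) T) C
          = emeasure (density (lborel \<Otimes>\<^sub>M lborel) h2) C" .
    qed
    finally show ?thesis .
  qed
  have mTXY[measurable]: "(\<lambda>\<omega>. T (X \<omega>, Y \<omega>)) \<in> measurable M (borel \<Otimes>\<^sub>M borel)"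
    by measurable
  have PUV: "prob_space (density (lborel \<Otimes>\<^sub>M lborel) h2)"
    using prob_space_distr[OF mTXY] UV by simp
  have [measurable]: "KU \<in> borel_measurable lborel" "KV \<in> borel_measurable lborel" by simp_all
  define NU where "NU = (\<integral>\<^sup>+u. ennreal (KU u) \<partial>lborel)"
  define NV where "NV = (\<integral>\<^sup>+u. ennreal (KV u) \<partial>lborel)"
  have "1 = emeasure (density (lborel \<Otimes>\<^sub>M lborel) h2) (space (lborel \<Otimes>\<^sub>M lborel))"
    using prob_space.emeasure_space_1[OF PUV] by simp
  also have "\<dots> = (\<integral>\<^sup>+z. h2 z * indicator (space (lborel \<Otimes>\<^sub>M lborel)) z \<partial>(lborel \<Otimes>\<^sub>M lborel))"
    by (rule emeasure_density[OF _ sets.top]) simp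
  also have "\<dots> = (\<integral>\<^sup>+z. h2 z \<partial>(lborel \<Otimes>\<^sub>M lborel))"
    by (simp add: space_pair_measure)
  also have "\<dots> = ennreal (1 / (ZX * ZY)) * (\<integral>\<^sup>+z. ennreal (KU (fst z) * KV (snd z)) \<partial>(lborel \<Otimes>\<^sub>M lborel))"
    unfolding h2_def by (rule nn_integral_cmult) measurable
  also have "\<dots> = ennreal (1 / (ZX * ZY)) * (NU * NV)"
    unfolding NU_def NV_def by (subst nn_integral_prod_split) (use nnU nnV in auto)
  finally have eq1: "ennreal (1 / (ZX * ZY)) * (NU * NV) = 1" by simp
  have NUV: "NU * NV = ennreal (ZX * ZY)"
  proof -
    have "ennreal (ZX * ZY) * (ennreal (1 / (ZX * ZY)) * (NU * NV)) = ennreal (ZX * ZY)"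
      by (simp add: eq1)
    moreover have "ennreal (ZX * ZY) * ennreal (1 / (ZX * ZY)) = 1"
      using ZXpos ZYpos by (simp add: ennreal_mult[symmetric])
    ultimately show ?thesis by (simp add: mult.assoc[symmetric])
  qed
  have NU0: "NU \<noteq> 0" and NV0: "NV \<noteq> 0" using NUV ZXpos ZYpos by auto
  have NUt: "NU \<noteq> \<top>" and NVt: "NV \<noteq> \<top>" using NUV NU0 NV0 by (auto simp: ennreal_mult_eq_top_iff)
  have iU: "integrable lborel KU"
    by (rule integrableI_nonneg) (use nnU NUt in \<open>auto simp: NU_def less_top\<close>)
  have iV: "integrable lborel KV"
    by (rule integrableI_nonneg) (use nnV NVt in \<open>auto simp: NV_def less_top\<close>)
  have NUe: "NU = ennreal ZU" unfolding NU_def ZU_def by (rule nn_integral_eq_integral[OF iU]) (simp add: nnU)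
  have NVe: "NV = ennreal ZV" unfolding NV_def ZV_def by (rule nn_integral_eq_integral[OF iV]) (simp add: nnV)
  have ZUnn: "0 \<le> ZU" "0 \<le> ZV" unfolding ZU_def ZV_def using nnU nnV by (simp_all add: integral_nonneg)
  have ZUpos: "0 < ZU" using NU0 NUe ZUnn by (cases "ZU = 0") auto
  have ZVpos: "0 < ZV" using NV0 NVe ZUnn by (cases "ZV = 0") auto
  have Zeq: "ZU * ZV = ZX * ZY"
  proof -
    have "ennreal (ZU * ZV) = ennreal (ZX * ZY)" using NUV NUe NVe ZUnn by (simp add: ennreal_mult)
    then show ?thesis using ZUpos ZVpos ZXpos ZYpos by simp
  qed
  have h2eq: "h2 = (\<lambda>(u, v). fU u * fV v)"
  proof
    fix z :: "real \<times> real"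
    obtain u v where z: "z = (u, v)" by (cases z)
    have "h2 z = ennreal (1 / (ZX * ZY)) * ennreal (KU u * KV v)" by (simp add: h2_def z)
    also have "\<dots> = ennreal (1 / (ZX * ZY) * (KU u * KV v))"
      by (rule ennreal_mult[symmetric]) (use ZXpos ZYpos nnU nnV in auto)
    also have "\<dots> = ennreal (KU u / ZU * (KV v / ZV))"
      using Zeq ZUpos ZVpos by (simp add: field_simps)
    also have "\<dots> = fU u * fV v"
      unfolding fU_def fV_def by (rule ennreal_mult) (use ZUpos ZVpos nnU nnV in auto)
    finally show "h2 z = (case z of (u, v) \<Rightarrow> fU u * fV v)" by (simp add: z)
  qed
  have [measurable]: "fU \<in> borel_measurable borel" "fV \<in> borel_measurable borel" by (simp_all add: fU_def fV_def)
  have PU: "prob_space (density lborel fU)"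
  proof (rule prob_spaceI)
    have "emeasure (density lborel fU) (space (density lborel fU)) = (\<integral>\<^sup>+x. ennreal (1 / ZU) * ennreal (KU x) \<partial>lborel)"
      using ZUpos nnU by (auto simp: emeasure_density fU_def ennreal_mult[symmetric] intro!: nn_integral_cong)
    also have "\<dots> = ennreal (1 / ZU) * NU" unfolding NU_def by (rule nn_integral_cmult) measurable
    also have "\<dots> = 1" using NUe ZUpos by (simp add: ennreal_mult[symmetric])
    finally show "emeasure (density lborel fU) (space (density lborel fU)) = 1" .
  qed
  have PV: "prob_space (density lborel fV)"
  proof (rule prob_spaceI)
    have "emeasure (density lborel fV) (space (density lborel fV)) = (\<integral>\<^sup>+x. ennreal (1 / ZV) * ennreal (KV x) \<partial>lborel)"
      using ZVpos nnV by (auto simp: emeasure_density fV_def ennreal_mult[symmetric] intro!: nn_integral_cong)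
    also have "\<dots> = ennreal (1 / ZV) * NV" unfolding NV_def by (rule nn_integral_cmult) measurable
    also have "\<dots> = 1" using NVe ZVpos by (simp add: ennreal_mult[symmetric])
    finally show "emeasure (density lborel fV) (space (density lborel fV)) = 1" .
  qed
  interpret DU: prob_space "density lborel fU" by (rule PU)
  interpret DV: prob_space "density lborel fV" by (rule PV)
  interpret DUV: pair_prob_space "density lborel fU" "density lborel fV" ..
  have UV2: "distr M (borel \<Otimes>\<^sub>M borel) (\<lambda>\<omega>. T (X \<omega>, Y \<omega>)) = density lborel fU \<Otimes>\<^sub>M density lborel fV"
    unfolding UV h2eq
    by (rule pair_measure_density[symmetric]) (auto intro: sigma_finite_lborel DV.sigma_finite_measure_axioms)
  have mU[measurable]: "(\<lambda>\<omega>. fst (T (X \<omega>, Y \<omega>))) \<in> measurable M borel" by measurable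
  have mV[measurable]: "(\<lambda>\<omega>. snd (T (X \<omega>, Y \<omega>))) \<in> measurable M borel" by measurable
  have margU: "distr M borel (\<lambda>\<omega>. fst (T (X \<omega>, Y \<omega>))) = density lborel fU"
  proof -
    have "distr M borel (\<lambda>\<omega>. fst (T (X \<omega>, Y \<omega>))) = distr (distr M (borel \<Otimes>\<^sub>M borel) (\<lambda>\<omega>. T (X \<omega>, Y \<omega>))) borel fst"
      by (subst distr_distr) (auto simp: comp_def)
    also have "\<dots> = distr (density lborel fU \<Otimes>\<^sub>M density lborel fV) (density lborel fU) fst"
      unfolding UV2 by (rule distr_target_cong) auto
    also have "\<dots> = density lborel fU" by (rule DV.distr_pair_fst)
    finally show ?thesis .
  qed
  have margV: "distr M borel (\<lambda>\<omega>. snd (T (X \<omega>, Y \<omega>))) = density lborel fV"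
  proof -
    have "distr M borel (\<lambda>\<omega>. snd (T (X \<omega>, Y \<omega>))) = distr (distr M (borel \<Otimes>\<^sub>M borel) (\<lambda>\<omega>. T (X \<omega>, Y \<omega>))) borel snd"
      by (subst distr_distr) (auto simp: comp_def)
    also have "\<dots> = distr (density lborel fU \<Otimes>\<^sub>M density lborel fV) (density lborel fV) snd"
      unfolding UV2 by (rule distr_target_cong) auto
    also have "\<dots> = distr (distr (density lborel fV \<Otimes>\<^sub>M density lborel fU) (density lborel fU \<Otimes>\<^sub>M density lborel fV) (\<lambda>(x, y). (y, x))) (density lborel fV) snd"
      by (simp add: DUV.distr_pair_swap[symmetric])
    also have "\<dots> = distr (density lborel fV \<Otimes>\<^sub>M density lborel fU) (density lborel fV) fst"
      by (subst distr_distr) (auto simp: comp_def case_prod_beta)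
    also have "\<dots> = density lborel fV" by (rule DU.distr_pair_fst)
    finally show ?thesis .
  qed
  show ?thesis
  proof (intro conjI)
    show "indep_var borel (\<lambda>\<omega>. fst (T (X \<omega>, Y \<omega>))) borel (\<lambda>\<omega>. snd (T (X \<omega>, Y \<omega>)))"
      unfolding indep_var_distribution_eq
      using UV2 margU margV by simp
    show "distributed M lborel (\<lambda>\<omega>. fst (T (X \<omega>, Y \<omega>))) (\<lambda>x. ennreal (KU x / (\<integral>y. KU y \<partial>lborel)))"
      unfolding distributed_def using margU by (simp add: distr_borel_lborel fU_def ZU_def)
    show "distributed M lborel (\<lambda>\<omega>. snd (T (X \<omega>, Y \<omega>))) (\<lambda>x. ennreal (KV x / (\<integral>y. KV y \<partial>lborel)))"
      unfolding distributed_def using margV by (simp add: distr_borel_lborel fV_def ZV_def)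
  qed
qed

lemma gbp_pos: assumes "0 < x" "0 < p" "0 < q" shows "0 < gbp_kernel lam a b p q x"
proof -
  have "0 < 1 + p * x" "0 < 1 + q / x" using assms by (simp_all add: add_pos_pos)
  then show ?thesis using assms unfolding gbp_kernel_def by simp
qed

lemma gbp_ln: assumes "0 < x" "0 < p" "0 < q"
  shows "ln (gbp_kernel lam a b p q x) = (lam - 1) * ln x + (- a - lam / 2) * ln (1 + p * x) + (- b + lam / 2) * ln (1 + q / x)"
proof -
  have "0 < 1 + p * x" "0 < 1 + q / x" using assms by (simp_all add: add_pos_pos)
  then show ?thesis using assms unfolding gbp_kernel_def by (simp add: ln_mult ln_powr)
qed

lemma bp_pos: "0 < x \<Longrightarrow> 0 < bp_kernel A B x"
  unfolding bp_kernel_def by simp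

lemma bp_ln: assumes "0 < x"
  shows "ln (bp_kernel A B x) = (A - 1) * ln x + (- A - B) * ln (1 + x)"
proof -
  have "0 < 1 + x" using assms by simp
  then show ?thesis using assms unfolding bp_kernel_def by (simp add: ln_mult ln_powr)
qed

lemma gbp_nonneg: "0 \<le> p \<Longrightarrow> 0 \<le> q \<Longrightarrow> 0 \<le> gbp_kernel lam a b p q x"
  unfolding gbp_kernel_def by simp

lemma bp_nonneg: "0 \<le> bp_kernel A B x"
  unfolding bp_kernel_def by simp

lemma gbp_meas[measurable]: "gbp_kernel lam a b p q \<in> borel_measurable borel"
  unfolding gbp_kernel_def by measurable

lemma bp_meas[measurable]: "bp_kernel A B \<in> borel_measurable borel"
  unfolding bp_kernel_def by measurable


lemma J_abs:
  fixes R W d x y p q :: real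
  assumes "0 < d" "0 < x" "0 < y" "0 < p" "0 < q"
  shows "((q * R / (d * x * p)) * d * (W / (d * x * p))) / (y * q / p)^2 * (q / (d * x * p)) = R * W / (d^2 * x^3 * y^2 * p)"
  using assms by (simp add: field_simps power2_eq_square power3_eq_cube)

lemma identity_b:
  fixes \<delta> lam a b x y :: real
  assumes d: "0 < \<delta>" and x: "0 < x" and y: "0 < y"
  defines "u \<equiv> (1 + x + y) / (\<delta> * x * y)"
  defines "v \<equiv> (1 + x + y + \<delta> * x * y) / (\<delta> * x * (1 + x))"
  shows "gbp_kernel lam b a \<delta> 1 u * bp_kernel (a - lam / 2) lam v * (((1 + v) * \<delta> * v) / (\<delta> * x * v - 1)^2 * ((1 + \<delta> * x) / (\<delta> * x * (1 + x))))
       = gbp_kernel lam a b \<delta> 1 x * bp_kernel (b - lam / 2) lam y"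
proof -
  define R where "R = 1 + x + y"
  define W where "W = 1 + x + y + \<delta> * x * y"
  have Rp: "0 < R" and Wp: "0 < W" using x y d by (simp_all add: R_def W_def add_pos_pos)
  have up: "0 < u" and vp: "0 < v" using x y d Rp Wp by (simp_all add: u_def v_def R_def W_def add_pos_pos)
  have dxp: "0 < 1 + \<delta> * x" "0 < 1 + x" "0 < 1 + y" using x y d by (simp_all add: add_pos_pos)
  have e1: "1 + \<delta> * u = (1 + x) * (1 + y) / (x * y)" using x y d unfolding u_def by (simp add: field_simps)
  have e2: "1 + 1 / u = W / R" using x y d Rp unfolding u_def R_def W_def by (simp add: field_simps)
  have nz: "\<delta> * x * (1 + x) \<noteq> 0" using x d dxp by simp
  have e3: "1 + v = (1 + \<delta> * x) * R / (\<delta> * x * (1 + x))" using nz unfolding v_def R_def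
    by (simp add: divide_simps) (simp add: algebra_simps)
  have e4: "\<delta> * x * v - 1 = y * (1 + \<delta> * x) / (1 + x)" using nz dxp unfolding v_def
    by (simp add: divide_simps) (simp add: algebra_simps)
  have J: "((1 + v) * \<delta> * v) / (\<delta> * x * v - 1)^2 * ((1 + \<delta> * x) / (\<delta> * x * (1 + x)))
           = R * W / (\<delta>^2 * x^3 * y^2 * (1 + x))"
  proof -
    have vW: "v = W / (\<delta> * x * (1 + x))" unfolding v_def W_def ..
    have "((1 + v) * \<delta> * v) / (\<delta> * x * v - 1)^2 * ((1 + \<delta> * x) / (\<delta> * x * (1 + x)))
       = (((1 + \<delta> * x) * R / (\<delta> * x * (1 + x))) * \<delta> * (W / (\<delta> * x * (1 + x)))) / (y * (1 + \<delta> * x) / (1 + x))^2 * ((1 + \<delta> * x) / (\<delta> * x * (1 + x)))"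
      by (simp only: e3 e4 flip: vW)
    also have "\<dots> = R * W / (\<delta>^2 * x^3 * y^2 * (1 + x))"
      by (rule J_abs) (use x y d dxp in auto)
    finally show ?thesis .
  qed
  have lu: "ln u = ln R - ln \<delta> - ln x - ln y" using x y d Rp unfolding u_def R_def by (simp add: ln_div ln_mult)
  have l1: "ln (1 + \<delta> * u) = ln (1 + x) + ln (1 + y) - ln x - ln y" unfolding e1 using x y dxp by (simp add: ln_div ln_mult)
  have l2: "ln (1 + 1 / u) = ln W - ln R" unfolding e2 using Rp Wp by (simp add: ln_div)
  have lv: "ln v = ln W - ln \<delta> - ln x - ln (1 + x)" using x y d Wp dxp unfolding v_def W_def by (simp add: ln_div ln_mult)
  have l3: "ln (1 + v) = ln (1 + \<delta> * x) + ln R - ln \<delta> - ln x - ln (1 + x)" unfolding e3 using x d dxp Rp by (simp add: ln_div ln_mult)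
  have lJ: "ln (R * W / (\<delta>^2 * x^3 * y^2 * (1 + x))) = ln R + ln W - 2 * ln \<delta> - 3 * ln x - 2 * ln y - ln (1 + x)"
    using x y d Rp Wp dxp by (simp add: ln_div ln_mult ln_realpow)
  have lx: "ln (1 + 1 / x) = ln (1 + x) - ln x"
  proof -
    have "1 + 1 / x = (1 + x) / x" using x by (simp add: field_simps)
    then show ?thesis using x dxp by (simp add: ln_div)
  qed
  have Jp: "0 < R * W / (\<delta>^2 * x^3 * y^2 * (1 + x))" using x y d Rp Wp dxp by simp
  have p1: "0 < gbp_kernel lam b a \<delta> 1 u" by (rule gbp_pos[OF up d]) simp
  have p2: "0 < bp_kernel (a - lam / 2) lam v" by (rule bp_pos[OF vp])
  have p3: "0 < gbp_kernel lam a b \<delta> 1 x" by (rule gbp_pos[OF x d]) simp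
  have p4: "0 < bp_kernel (b - lam / 2) lam y" by (rule bp_pos[OF y])
  have LN: "ln (gbp_kernel lam b a \<delta> 1 u * bp_kernel (a - lam / 2) lam v * (R * W / (\<delta>^2 * x^3 * y^2 * (1 + x))))
      = ln (gbp_kernel lam a b \<delta> 1 x * bp_kernel (b - lam / 2) lam y)"
    using p1 p2 p3 p4 Jp up vp x y d
    apply (simp only: ln_mult_pos mult_pos_pos gbp_ln bp_ln zero_less_one lJ)
    apply (simp only: lu l1 l2 lv l3 lx)
    apply (simp add: ln_div ln_mult dxp)
    apply (simp add: algebra_simps add_divide_distrib diff_divide_distrib)
    done
  have "gbp_kernel lam b a \<delta> 1 u * bp_kernel (a - lam / 2) lam v * (R * W / (\<delta>^2 * x^3 * y^2 * (1 + x)))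
      = gbp_kernel lam a b \<delta> 1 x * bp_kernel (b - lam / 2) lam y"
    by (rule ln_inj_iff[THEN iffD1, OF _ _ LN]) (use p1 p2 p3 p4 Jp in \<open>simp_all only: mult_pos_pos\<close>)
  then show ?thesis unfolding J .
qed



lemma derG: assumes "\<delta> * x * v \<noteq> 1"
  shows "((\<lambda>x. (1 + v) / (\<delta> * x * v - 1)) has_real_derivative - ((1 + v) * \<delta> * v) / (\<delta> * x * v - 1)^2) (at x)"
  using assms by (auto intro!: derivative_eq_intros simp: power2_eq_square field_simps)

lemma derH: assumes "\<delta> * x * (1 + x) \<noteq> 0"
  shows "((\<lambda>y. (1 + x + y + \<delta> * x * y) / (\<delta> * x * (1 + x))) has_real_derivative (1 + \<delta> * x) / (\<delta> * x * (1 + x))) (at y)"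
proof -
  have "((\<lambda>y. 1 + x + y + \<delta> * x * y) has_real_derivative 1 + \<delta> * x) (at y)"
    by (auto intro!: derivative_eq_intros)
  then show ?thesis by (rule DERIV_cdivide)
qed


lemma fst_borel_meas[measurable]: "fst \<in> borel_measurable (borel :: (real \<times> real) measure)"
  using measurable_fst[of "borel::real measure" "borel::real measure"] by (simp only: borel_prod)

lemma snd_borel_meas[measurable]: "snd \<in> borel_measurable (borel :: (real \<times> real) measure)"
  using measurable_snd[of "borel::real measure" "borel::real measure"] by (simp only: borel_prod)


lemma pair_borel_meas[measurable (raw)]:
  fixes f g :: "'a \<Rightarrow> real"
  assumes "f \<in> borel_measurable M" "g \<in> borel_measurable M"
  shows "(\<lambda>x. (f x, g x)) \<in> measurable M (borel :: (real \<times> real) measure)"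
  using measurable_Pair[OF assms] by (simp only: borel_prod)


lemma key_b:
  fixes \<delta> lam a b :: real and C :: "(real \<times> real) set"
  assumes d: "0 < \<delta>" and C[measurable]: "C \<in> sets (borel :: (real \<times> real) measure)"
  shows "(\<integral>\<^sup>+z. ennreal (gbp_kernel lam a b \<delta> 1 (fst z) * bp_kernel (b - lam / 2) lam (snd z)) * indicator C (FBe \<delta> (fst z) (snd z)) \<partial>(lborel \<Otimes>\<^sub>M lborel))
       = (\<integral>\<^sup>+z. ennreal (gbp_kernel lam b a \<delta> 1 (fst z) * bp_kernel (a - lam / 2) lam (snd z)) * indicator C z \<partial>(lborel \<Otimes>\<^sub>M lborel))"
proof -
  define Q where "Q = {z :: real \<times> real. 0 < fst z \<and> 0 < snd z}"
  define Bs where "Bs = {z :: real \<times> real. 0 < fst z \<and> 0 < snd z \<and> 1 < \<delta> * fst z * snd z}"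
  define G where "G = (\<lambda>v x::real. (1 + v) / (\<delta> * x * v - 1))"
  define G' where "G' = (\<lambda>v x::real. - ((1 + v) * \<delta> * v) / (\<delta> * x * v - 1)^2)"
  define H where "H = (\<lambda>x y::real. (1 + x + y + \<delta> * x * y) / (\<delta> * x * (1 + x)))"
  define H' where "H' = (\<lambda>x y::real. (1 + \<delta> * x) / (\<delta> * x * (1 + x)))"
  define \<phi>2 where "\<phi>2 = (\<lambda>z. gbp_kernel lam b a \<delta> 1 (fst z) * bp_kernel (a - lam / 2) lam (snd z) * indicator C z)"
  define \<phi>1 where "\<phi>1 = (\<lambda>z. \<phi>2 (G (snd z) (fst z), snd z) * \<bar>G' (snd z) (fst z)\<bar> * indicator Bs z)"
  have Qm[measurable]: "Q \<in> sets borel" unfolding Q_def by measurable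
  have Bm[measurable]: "Bs \<in> sets borel" unfolding Bs_def by measurable
  have [measurable]: "(\<lambda>z. G (snd z) (fst z)) \<in> borel_measurable borel" "(\<lambda>z. G' (snd z) (fst z)) \<in> borel_measurable borel"
    "(\<lambda>z. H (fst z) (snd z)) \<in> borel_measurable borel" "(\<lambda>z. H' (fst z) (snd z)) \<in> borel_measurable borel"
    unfolding G_def G'_def H_def H'_def by measurable
  have m2[measurable]: "\<phi>2 \<in> borel_measurable borel" unfolding \<phi>2_def by measurable
  have m1[measurable]: "\<phi>1 \<in> borel_measurable borel" unfolding \<phi>1_def by measurable
  have nn2: "\<And>z. 0 \<le> \<phi>2 z" unfolding \<phi>2_def using d by (auto intro!: mult_nonneg_nonneg gbp_nonneg bp_nonneg)
  have nn1: "\<And>z. 0 \<le> \<phi>1 z" unfolding \<phi>1_def using nn2 by auto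
  have stepF: "(\<integral>\<^sup>+z. ennreal (\<phi>2 (G (snd z) (fst z), snd z) * \<bar>G' (snd z) (fst z)\<bar>) * indicator Bs z \<partial>(lborel \<Otimes>\<^sub>M lborel))
       = (\<integral>\<^sup>+z. ennreal (\<phi>2 z) * indicator Q z \<partial>(lborel \<Otimes>\<^sub>M lborel))"
  proof (rule step_fst[OF Bm Qm nn2 m2])
    show "(\<lambda>z. \<phi>2 (G (snd z) (fst z), snd z) * \<bar>G' (snd z) (fst z)\<bar>) \<in> borel_measurable borel" by measurable
    fix x v :: real
    assume "(x, v) \<in> Bs"
    then have "\<delta> * x * v \<noteq> 1" by (simp add: Bs_def)
    then show "(G v has_real_derivative G' v x) (at x within {x. (x, v) \<in> Bs})"
      unfolding G_def G'_def by (rule has_field_derivative_at_within[OF derG])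
  next
    fix v :: real
    show "inj_on (G v) {x. (x, v) \<in> Bs}"
    proof (rule inj_onI)
      fix x1 x2 assume h: "x1 \<in> {x. (x, v) \<in> Bs}" "x2 \<in> {x. (x, v) \<in> Bs}" "G v x1 = G v x2"
      then have "\<delta> * x1 * v - 1 > 0" "\<delta> * x2 * v - 1 > 0" "0 < v" by (auto simp: Bs_def)
      with h(3) have "\<delta> * x1 * v - 1 = \<delta> * x2 * v - 1" unfolding G_def by (simp add: field_simps)
      then show "x1 = x2" using d \<open>0 < v\<close> by simp
    qed
    show "G v ` {x. (x, v) \<in> Bs} = {u. (u, v) \<in> Q}"
    proof (intro equalityI subsetI)
      fix u assume "u \<in> G v ` {x. (x, v) \<in> Bs}"
      then obtain x where "(x, v) \<in> Bs" "u = G v x" by auto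
      then show "u \<in> {u. (u, v) \<in> Q}" by (auto simp: Bs_def Q_def G_def)
    next
      fix u assume "u \<in> {u. (u, v) \<in> Q}"
      then have u: "0 < u" "0 < v" by (auto simp: Q_def)
      define x where "x = (1 + v + u) / (\<delta> * u * v)"
      have x0: "0 < x" using u d by (simp add: x_def add_pos_pos)
      have e: "\<delta> * x * v - 1 = (1 + v) / u" using u d by (simp add: x_def field_simps)
      have "0 < (1 + v) / u" using u by (simp add: add_pos_pos)
      then have "1 < \<delta> * x * v" using e by linarith
      then have "(x, v) \<in> Bs" using x0 u by (simp add: Bs_def)
      moreover have "G v x = u" unfolding G_def e using u by simp
      ultimately show "u \<in> G v ` {x. (x, v) \<in> Bs}" by force
    qed
  qed
  have stepS: "(\<integral>\<^sup>+z. ennreal (\<phi>1 (fst z, H (fst z) (snd z)) * \<bar>H' (fst z) (snd z)\<bar>) * indicator Q z \<partial>(lborel \<Otimes>\<^sub>M lborel))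
       = (\<integral>\<^sup>+z. ennreal (\<phi>1 z) * indicator Bs z \<partial>(lborel \<Otimes>\<^sub>M lborel))"
  proof (rule step_snd[OF Qm Bm nn1 m1])
    show "(\<lambda>z. \<phi>1 (fst z, H (fst z) (snd z)) * \<bar>H' (fst z) (snd z)\<bar>) \<in> borel_measurable borel" by measurable
    fix x y :: real
    assume "(x, y) \<in> Q"
    then have "\<delta> * x * (1 + x) \<noteq> 0" using d by (simp add: Q_def)
    then show "(H x has_real_derivative H' x y) (at y within {y. (x, y) \<in> Q})"
      unfolding H_def H'_def by (rule has_field_derivative_at_within[OF derH])
  next
    fix x :: real
    show "inj_on (H x) {y. (x, y) \<in> Q}"
    proof (rule inj_onI)
      fix y1 y2 assume h: "y1 \<in> {y. (x, y) \<in> Q}" "y2 \<in> {y. (x, y) \<in> Q}" "H x y1 = H x y2"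
      then have x: "0 < x" by (auto simp: Q_def)
      then have "\<delta> * x * (1 + x) \<noteq> 0" using d by simp
      with h(3) have "1 + x + y1 + \<delta> * x * y1 = 1 + x + y2 + \<delta> * x * y2" unfolding H_def by simp
      then have "y1 * (1 + \<delta> * x) = y2 * (1 + \<delta> * x)" by (simp add: algebra_simps)
      moreover have "1 + \<delta> * x \<noteq> 0" using mult_pos_pos[OF d x] by linarith
      ultimately show "y1 = y2" by simp
    qed
    show "H x ` {y. (x, y) \<in> Q} = {v. (x, v) \<in> Bs}"
    proof (intro equalityI subsetI)
      fix v assume "v \<in> H x ` {y. (x, y) \<in> Q}"
      then obtain y where y: "0 < x" "0 < y" "v = H x y" by (auto simp: Q_def)
      have p: "0 < 1 + x" "0 < 1 + \<delta> * x" using y d by (simp_all add: add_pos_pos)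
      have "\<delta> * x * v - 1 = y * (1 + \<delta> * x) / (1 + x)" using y d p unfolding H_def
        by (simp add: divide_simps) (simp add: algebra_simps)
      moreover have "0 < y * (1 + \<delta> * x) / (1 + x)" using y p by simp
      ultimately have "1 < \<delta> * x * v" by linarith
      moreover have "0 < v" using y d p unfolding H_def by (simp add: add_pos_pos)
      ultimately show "v \<in> {v. (x, v) \<in> Bs}" using y by (simp add: Bs_def)
    next
      fix v assume "v \<in> {v. (x, v) \<in> Bs}"
      then have v: "0 < x" "0 < v" "1 < \<delta> * x * v" by (auto simp: Bs_def)
      have p: "0 < 1 + x" "0 < 1 + \<delta> * x" using v d by (simp_all add: add_pos_pos)
      define y where "y = (1 + x) * (\<delta> * x * v - 1) / (1 + \<delta> * x)"
      have y0: "0 < y" using v p by (simp add: y_def)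
      have "H x y = v" unfolding H_def y_def using v p d
        by (simp add: divide_simps) (simp add: algebra_simps)
      then show "v \<in> H x ` {y. (x, y) \<in> Q}" using y0 v by (force simp: Q_def)
    qed
  qed
  have "(\<integral>\<^sup>+z. ennreal (gbp_kernel lam b a \<delta> 1 (fst z) * bp_kernel (a - lam / 2) lam (snd z)) * indicator C z \<partial>(lborel \<Otimes>\<^sub>M lborel))
      = (\<integral>\<^sup>+z. ennreal (\<phi>2 z) * indicator Q z \<partial>(lborel \<Otimes>\<^sub>M lborel))"
    by (intro nn_integral_cong) (auto simp: \<phi>2_def Q_def indicator_def gbp_kernel_def bp_kernel_def)
  also have "\<dots> = (\<integral>\<^sup>+z. ennreal (\<phi>1 z) * indicator Bs z \<partial>(lborel \<Otimes>\<^sub>M lborel))"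
    unfolding stepF[symmetric] by (intro nn_integral_cong) (auto simp: \<phi>1_def indicator_def)
  also have "\<dots> = (\<integral>\<^sup>+z. ennreal (\<phi>1 (fst z, H (fst z) (snd z)) * \<bar>H' (fst z) (snd z)\<bar>) * indicator Q z \<partial>(lborel \<Otimes>\<^sub>M lborel))"
    by (rule stepS[symmetric])
  also have "\<dots> = (\<integral>\<^sup>+z. ennreal (gbp_kernel lam a b \<delta> 1 (fst z) * bp_kernel (b - lam / 2) lam (snd z)) * indicator C (FBe \<delta> (fst z) (snd z)) \<partial>(lborel \<Otimes>\<^sub>M lborel))"
  proof (intro nn_integral_cong)
    fix z :: "real \<times> real"
    obtain x y where z: "z = (x, y)" by (cases z)
    show "ennreal (\<phi>1 (fst z, H (fst z) (snd z)) * \<bar>H' (fst z) (snd z)\<bar>) * indicator Q z =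
          ennreal (gbp_kernel lam a b \<delta> 1 (fst z) * bp_kernel (b - lam / 2) lam (snd z)) * indicator C (FBe \<delta> (fst z) (snd z))"
    proof (cases "0 < x \<and> 0 < y")
      case False
      then show ?thesis by (auto simp: z Q_def gbp_kernel_def bp_kernel_def)
    next
      case True
      then have x: "0 < x" and y: "0 < y" by auto
      define v where "v = H x y"
      have p: "0 < 1 + x" "0 < 1 + \<delta> * x" using x d by (simp_all add: add_pos_pos)
      have ev: "\<delta> * x * v - 1 = y * (1 + \<delta> * x) / (1 + x)" using x y d p unfolding v_def H_def
        by (simp add: divide_simps) (simp add: algebra_simps)
      have vpos: "0 < v" using x y d p unfolding v_def H_def by (simp add: add_pos_pos)
      have "0 < y * (1 + \<delta> * x) / (1 + x)" using y p by simp
      then have "1 < \<delta> * x * v" using ev by linarith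
      then have inB: "(x, v) \<in> Bs" using x vpos by (simp add: Bs_def)
      have Gv: "G v x = (1 + x + y) / (\<delta> * x * y)"
      proof -
        have yq: "y + \<delta> * (x * y) \<noteq> 0" using mult_pos_pos[OF y p(2)] by (simp add: algebra_simps)
        show ?thesis unfolding G_def ev v_def H_def using x y d p yq by (simp add: divide_simps) (simp add: algebra_simps)
      qed
      have FB: "FBe \<delta> x y = (G v x, v)"
        unfolding Gv unfolding v_def H_def FBe_def using x d p by (simp add: field_simps)
      have absG: "\<bar>G' v x\<bar> = ((1 + v) * \<delta> * v) / (\<delta> * x * v - 1)^2"
        unfolding G'_def using vpos d by simp
      have absH: "\<bar>H' x y\<bar> = (1 + \<delta> * x) / (\<delta> * x * (1 + x))"
        unfolding H'_def using x d p by simp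
      have vdef: "v = (1 + x + y + \<delta> * x * y) / (\<delta> * x * (1 + x))" unfolding v_def H_def ..
      have ID: "gbp_kernel lam b a \<delta> 1 (G v x) * bp_kernel (a - lam / 2) lam v * (((1 + v) * \<delta> * v) / (\<delta> * x * v - 1)^2 * ((1 + \<delta> * x) / (\<delta> * x * (1 + x))))
           = gbp_kernel lam a b \<delta> 1 x * bp_kernel (b - lam / 2) lam y"
        unfolding Gv unfolding vdef by (rule identity_b[OF d x y])
      have "\<phi>1 (x, H x y) * \<bar>H' x y\<bar> = gbp_kernel lam a b \<delta> 1 x * bp_kernel (b - lam / 2) lam y * indicator C (FBe \<delta> x y)"
        unfolding \<phi>1_def \<phi>2_def v_def[symmetric] using inB
        by (simp add: FB absG absH ID[symmetric] mult_ac)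
      then show ?thesis using x y by (simp add: z Q_def indicator_def)
    qed
  qed
  finally show ?thesis by simp
qed

lemma part_b:
  fixes M :: "'s measure" and \<delta> lam a b :: real and X Y :: "'s \<Rightarrow> real"
  assumes P: "prob_space M"
    and h: "0 < \<delta> \<and> 0 < a \<and> 0 < b \<and>
      0 < lam / 2 \<and> lam / 2 < min a b \<and>
      distributed M lborel X (gbp_density lam a b \<delta> 1) \<and>
      distributed M lborel Y (bp_density (b - lam / 2) lam) \<and>
      prob_space.indep_var M borel X borel Y"
  shows "(let U = (\<lambda>\<omega>. fst (FBe \<delta> (X \<omega>) (Y \<omega>)));
           V = (\<lambda>\<omega>. snd (FBe \<delta> (X \<omega>) (Y \<omega>)))
       in prob_space.indep_var M borel U borel V \<and>
          distributed M lborel U (gbp_density lam b a \<delta> 1) \<and>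
          distributed M lborel V (bp_density (a - lam / 2) lam))"
proof -
  have d: "0 < \<delta>" using h by simp
  have T: "(\<lambda>z. FBe \<delta> (fst z) (snd z)) \<in> borel_measurable borel"
    unfolding FBe_def by measurable
  have "prob_space.indep_var M borel (\<lambda>\<omega>. fst ((\<lambda>z. FBe \<delta> (fst z) (snd z)) (X \<omega>, Y \<omega>))) borel (\<lambda>\<omega>. snd ((\<lambda>z. FBe \<delta> (fst z) (snd z)) (X \<omega>, Y \<omega>))) \<and>
         distributed M lborel (\<lambda>\<omega>. fst ((\<lambda>z. FBe \<delta> (fst z) (snd z)) (X \<omega>, Y \<omega>))) (\<lambda>x. ennreal (gbp_kernel lam b a \<delta> 1 x / (\<integral>y. gbp_kernel lam b a \<delta> 1 y \<partial>lborel))) \<and>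
         distributed M lborel (\<lambda>\<omega>. snd ((\<lambda>z. FBe \<delta> (fst z) (snd z)) (X \<omega>, Y \<omega>))) (\<lambda>x. ennreal (bp_kernel (a - lam / 2) lam x / (\<integral>y. bp_kernel (a - lam / 2) lam y \<partial>lborel)))"
  proof (rule glue[OF P])
    show "distributed M lborel X (\<lambda>x. ennreal (gbp_kernel lam a b \<delta> 1 x / (\<integral>y. gbp_kernel lam a b \<delta> 1 y \<partial>lborel)))"
      using h by (simp add: gbp_density_def[abs_def])
    show "distributed M lborel Y (\<lambda>x. ennreal (bp_kernel (b - lam / 2) lam x / (\<integral>y. bp_kernel (b - lam / 2) lam y \<partial>lborel)))"
      using h by (simp add: bp_density_def[abs_def])
    show "prob_space.indep_var M borel X borel Y" using h by simp
    fix C :: "(real \<times> real) set" assume "C \<in> sets borel"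
    then show "(\<integral>\<^sup>+z. ennreal (gbp_kernel lam a b \<delta> 1 (fst z) * bp_kernel (b - lam / 2) lam (snd z)) * indicator C ((\<lambda>z. FBe \<delta> (fst z) (snd z)) z) \<partial>(lborel \<Otimes>\<^sub>M lborel))
       = (\<integral>\<^sup>+z. ennreal (gbp_kernel lam b a \<delta> 1 (fst z) * bp_kernel (a - lam / 2) lam (snd z)) * indicator C z \<partial>(lborel \<Otimes>\<^sub>M lborel))"
      using key_b[OF d] by simp
  qed (use d T in \<open>auto intro: gbp_nonneg bp_nonneg\<close>)
  then show ?thesis by (simp add: Let_def gbp_density_def[abs_def] bp_density_def[abs_def])
qed

lemma identity_a:
  fixes \<alpha> \<beta> lam a b x y :: real
  assumes al: "0 < \<alpha>" and be: "0 < \<beta>" and x: "0 < x" and y: "0 < y"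
  defines "P \<equiv> 1 + x + y + \<beta> * x * y"
  defines "Q \<equiv> 1 + x + y + \<alpha> * x * y"
  defines "D1 \<equiv> \<beta> + \<alpha> * x + \<beta> * y + \<alpha> * \<beta> * x * y"
  defines "D2 \<equiv> \<alpha> + \<alpha> * x + \<beta> * y + \<alpha> * \<beta> * x * y"
  shows "gbp_kernel lam b a \<alpha> 1 (P / (y * D1)) * gbp_kernel (- lam) b a \<beta> 1 (Q / (x * D2)) * (P * Q / (x^2 * y^2 * D1 * D2))
       = gbp_kernel lam a b \<alpha> 1 x * gbp_kernel (- lam) a b \<beta> 1 y"
proof -
  have ax: "0 < \<alpha> * x" "0 < \<beta> * y" "0 < \<alpha> * x * y" "0 < \<beta> * x * y" "0 < \<alpha> * \<beta> * x * y"
    using al be x y by simp_all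
  have Pp: "0 < P" and Qp: "0 < Q" and D1p: "0 < D1" and D2p: "0 < D2"
    unfolding P_def Q_def D1_def D2_def using ax x y al be by linarith+
  have pp: "0 < 1 + x" "0 < 1 + y" "0 < 1 + \<alpha> * x" "0 < 1 + \<beta> * y" using x y ax by linarith+
  define u where "u = P / (y * D1)"
  define v where "v = Q / (x * D2)"
  have up: "0 < u" and vp: "0 < v" using Pp Qp D1p D2p x y by (simp_all add: u_def v_def)
  have f1: "y * D1 + \<alpha> * P = (1 + y) * D2" unfolding P_def D1_def D2_def by (simp add: algebra_simps)
  have f2: "P + y * D1 = (1 + \<beta> * y) * Q" unfolding P_def Q_def D1_def by (simp add: algebra_simps)
  have f3: "x * D2 + \<beta> * Q = (1 + x) * D1" unfolding Q_def D1_def D2_def by (simp add: algebra_simps)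
  have f4: "Q + x * D2 = (1 + \<alpha> * x) * P" unfolding P_def Q_def D2_def by (simp add: algebra_simps)
  have e1: "1 + \<alpha> * u = (1 + y) * D2 / (y * D1)"
  proof -
    have "1 + \<alpha> * u = (y * D1 + \<alpha> * P) / (y * D1)" unfolding u_def using y D1p by (simp add: field_simps)
    then show ?thesis by (simp only: f1)
  qed
  have e2: "1 + 1 / u = (1 + \<beta> * y) * Q / P"
  proof -
    have "1 + 1 / u = (P + y * D1) / P" unfolding u_def using y D1p Pp by (simp add: field_simps)
    then show ?thesis by (simp only: f2)
  qed
  have e3: "1 + \<beta> * v = (1 + x) * D1 / (x * D2)"
  proof -
    have "1 + \<beta> * v = (x * D2 + \<beta> * Q) / (x * D2)" unfolding v_def using x D2p by (simp add: field_simps)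
    then show ?thesis by (simp only: f3)
  qed
  have e4: "1 + 1 / v = (1 + \<alpha> * x) * P / Q"
  proof -
    have "1 + 1 / v = (Q + x * D2) / Q" unfolding v_def using x D2p Qp by (simp add: field_simps)
    then show ?thesis by (simp only: f4)
  qed
  have lu: "ln u = ln P - ln y - ln D1" unfolding u_def using y Pp D1p by (simp add: ln_div ln_mult)
  have lv: "ln v = ln Q - ln x - ln D2" unfolding v_def using x Qp D2p by (simp add: ln_div ln_mult)
  have l1: "ln (1 + \<alpha> * u) = ln (1 + y) + ln D2 - ln y - ln D1" unfolding e1 using y pp D1p D2p by (simp add: ln_div ln_mult)
  have l2: "ln (1 + 1 / u) = ln (1 + \<beta> * y) + ln Q - ln P" unfolding e2 using pp Pp Qp by (simp add: ln_div ln_mult)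
  have l3: "ln (1 + \<beta> * v) = ln (1 + x) + ln D1 - ln x - ln D2" unfolding e3 using x pp D1p D2p by (simp add: ln_div ln_mult)
  have l4: "ln (1 + 1 / v) = ln (1 + \<alpha> * x) + ln P - ln Q" unfolding e4 using pp Pp Qp by (simp add: ln_div ln_mult)
  have lx: "ln (1 + 1 / x) = ln (1 + x) - ln x"
  proof -
    have "1 + 1 / x = (1 + x) / x" using x by (simp add: field_simps)
    then show ?thesis using x pp by (simp add: ln_div)
  qed
  have ly: "ln (1 + 1 / y) = ln (1 + y) - ln y"
  proof -
    have "1 + 1 / y = (1 + y) / y" using y by (simp add: field_simps)
    then show ?thesis using y pp by (simp add: ln_div)
  qed
  have Jp: "0 < P * Q / (x^2 * y^2 * D1 * D2)" using Pp Qp D1p D2p x y by simp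
  have lJ: "ln (P * Q / (x^2 * y^2 * D1 * D2)) = ln P + ln Q - 2 * ln x - 2 * ln y - ln D1 - ln D2"
    using Pp Qp D1p D2p x y by (simp add: ln_div ln_mult ln_realpow)
  have p1: "0 < gbp_kernel lam b a \<alpha> 1 u" by (rule gbp_pos[OF up al]) simp
  have p2: "0 < gbp_kernel (- lam) b a \<beta> 1 v" by (rule gbp_pos[OF vp be]) simp
  have p3: "0 < gbp_kernel lam a b \<alpha> 1 x" by (rule gbp_pos[OF x al]) simp
  have p4: "0 < gbp_kernel (- lam) a b \<beta> 1 y" by (rule gbp_pos[OF y be]) simp
  have LN: "ln (gbp_kernel lam b a \<alpha> 1 u * gbp_kernel (- lam) b a \<beta> 1 v * (P * Q / (x^2 * y^2 * D1 * D2)))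
      = ln (gbp_kernel lam a b \<alpha> 1 x * gbp_kernel (- lam) a b \<beta> 1 y)"
    using p1 p2 p3 p4 Jp up vp x y al be
    apply (simp only: ln_mult_pos mult_pos_pos gbp_ln zero_less_one lJ)
    apply (simp only: lu l1 l2 lv l3 l4 lx ly)
    apply (simp add: algebra_simps add_divide_distrib diff_divide_distrib)
    done
  have "gbp_kernel lam b a \<alpha> 1 u * gbp_kernel (- lam) b a \<beta> 1 v * (P * Q / (x^2 * y^2 * D1 * D2))
      = gbp_kernel lam a b \<alpha> 1 x * gbp_kernel (- lam) a b \<beta> 1 y"
    by (rule ln_inj_iff[THEN iffD1, OF _ _ LN]) (use p1 p2 p3 p4 Jp in \<open>simp_all only: mult_pos_pos\<close>)
  then show ?thesis unfolding u_def v_def .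
qed

lemma mob_der:
  fixes A B C D t :: real
  assumes "C + D * t \<noteq> 0"
  shows "((\<lambda>t. (A + B * t) / (C + D * t)) has_real_derivative (B * C - A * D) / (C + D * t)^2) (at t)"
  using assms by (auto intro!: derivative_eq_intros simp: power2_eq_square field_simps)

lemma mob_inj:
  fixes A B C D t1 t2 :: real
  assumes "B * C - A * D \<noteq> 0" "C + D * t1 \<noteq> 0" "C + D * t2 \<noteq> 0"
    and "(A + B * t1) / (C + D * t1) = (A + B * t2) / (C + D * t2)"
  shows "t1 = t2"
proof -
  have "(A + B * t1) * (C + D * t2) = (A + B * t2) * (C + D * t1)"
    using assms(2-4) by (simp add: field_simps)
  then have "(B * C - A * D) * (t1 - t2) = 0" by (simp add: algebra_simps)
  then show ?thesis using assms(1) by simp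
qed

lemma pos_div_of_prod: "0 < a * b \<Longrightarrow> 0 < (a::real) / b"
  by (simp add: zero_less_mult_iff zero_less_divide_iff)

lemma onep: "0 < (a::real) \<Longrightarrow> 0 < b \<Longrightarrow> 0 < 1 + a * b"
  by (simp add: add_pos_pos)

lemma canc4: "a \<noteq> 0 \<Longrightarrow> b \<noteq> 0 \<Longrightarrow> k \<noteq> 0 \<Longrightarrow> D \<noteq> 0 \<Longrightarrow> (a * (u * k * b / D)) / (b * (k * a / D)) = (u::real)"
  by (simp add: field_simps)

lemma mob_inv:
  fixes A B C D v :: real
  assumes "v * D - B \<noteq> 0" "B * C - A * D \<noteq> 0"
  shows "(A + B * ((A - v * C) / (v * D - B))) / (C + D * ((A - v * C) / (v * D - B))) = v"
    and "C + D * ((A - v * C) / (v * D - B)) \<noteq> 0"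
proof -
  have e1: "A + B * ((A - v * C) / (v * D - B)) = v * (A * D - B * C) / (v * D - B)"
    using assms(1) by (simp add: field_simps; simp add: algebra_simps)
  have e2: "C + D * ((A - v * C) / (v * D - B)) = (A * D - B * C) / (v * D - B)"
    using assms(1) by (simp add: field_simps; simp add: algebra_simps)
  have nz: "A * D - B * C \<noteq> 0" using assms(2) by (simp add: algebra_simps)
  show "C + D * ((A - v * C) / (v * D - B)) \<noteq> 0" unfolding e2 using nz assms(1) by simp
  show "(A + B * ((A - v * C) / (v * D - B))) / (C + D * ((A - v * C) / (v * D - B))) = v"
    unfolding e1 e2 using nz assms(1) by simp
qed

lemma J_a_abs:
  fixes x y p q P Q D1 D2 k :: real
  assumes "0 < x" "0 < y" "0 < p" "0 < q" "0 < P" "0 < Q" "0 < D1" "0 < D2" "k \<noteq> 0"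
  shows "(Q / (x * D2)) * (q * P / (x * D2)) * (p * D1 / (x * D2)) * k / ((p * D1 / (x * D2)) * (y * k * q / D2))^2
          * (- (x * p * q * k) / (x * D2)^2) = - (P * Q / (x^2 * y^2 * D1 * D2))"
  using assms by (simp add: field_simps power2_eq_square)

lemma G_a_abs:
  fixes x y p q P D1 D2 k :: real
  assumes "0 < x" "0 < y" "0 < p" "0 < q" "0 < P" "0 < D1" "0 < D2" "k \<noteq> 0"
  shows "((q * P / (x * D2)) * (k * p / D2)) / ((p * D1 / (x * D2)) * (y * k * q / D2)) = P / (y * D1)"
  using assms by (simp add: field_simps)

lemma hlp1: "x \<noteq> 0 \<Longrightarrow> D \<noteq> 0 \<Longrightarrow> c * x * (Q / (x * D)) - 1 = (c * Q - D) / (D::real)"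
  by (simp add: field_simps)
lemma hlp2: "x \<noteq> 0 \<Longrightarrow> D \<noteq> 0 \<Longrightarrow> 1 + Q / (x * D) = (x * D + Q) / (x * (D::real))"
  by (simp add: field_simps)
lemma hlp3: "x \<noteq> 0 \<Longrightarrow> D \<noteq> 0 \<Longrightarrow> 1 + c * (Q / (x * D)) = (x * D + c * Q) / (x * (D::real))"
  by (simp add: field_simps)
lemma hlp4: "x \<noteq> 0 \<Longrightarrow> D \<noteq> 0 \<Longrightarrow> 1 - c * (Q / (x * D)) * x = (D - c * Q) / (D::real)"
  by (simp add: field_simps)
lemma hlp5: "x \<noteq> 0 \<Longrightarrow> D \<noteq> 0 \<Longrightarrow> c * (Q / (x * D)) * x - 1 = (c * Q - D) / (D::real)"
  by (simp add: field_simps)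

lemma key_a_neq:
  fixes \<alpha> \<beta> lam a b :: real and C :: "(real \<times> real) set"
  assumes al: "0 < \<alpha>" and be: "0 < \<beta>" and ne: "\<alpha> \<noteq> \<beta>" and C[measurable]: "C \<in> sets (borel :: (real \<times> real) measure)"
  shows "(\<integral>\<^sup>+z. ennreal (gbp_kernel lam a b \<alpha> 1 (fst z) * gbp_kernel (- lam) a b \<beta> 1 (snd z)) * indicator C (HI \<alpha> \<beta> (fst z) (snd z)) \<partial>(lborel \<Otimes>\<^sub>M lborel))
       = (\<integral>\<^sup>+z. ennreal (gbp_kernel lam b a \<alpha> 1 (fst z) * gbp_kernel (- lam) b a \<beta> 1 (snd z)) * indicator C z \<partial>(lborel \<Otimes>\<^sub>M lborel))"
proof -
  define k where "k = \<beta> - \<alpha>"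
  have k0: "k \<noteq> 0" using ne by (simp add: k_def)
  define Q where "Q = {z :: real \<times> real. 0 < fst z \<and> 0 < snd z}"
  define Bs where "Bs = {z :: real \<times> real. 0 < fst z \<and> 0 < snd z \<and> (\<alpha> * fst z * snd z - 1) * (\<beta> * fst z * snd z - 1) < 0}"
  define G where "G = (\<lambda>v x::real. ((1 + v) * (\<beta> * v * x - 1)) / ((1 + \<beta> * v) * (1 - \<alpha> * v * x)))"
  define G' where "G' = (\<lambda>v x::real. (v * (1 + v) * (1 + \<beta> * v) * k) / ((1 + \<beta> * v) * (1 - \<alpha> * v * x))^2)"
  define H where "H = (\<lambda>x y::real. (1 + x + y + \<alpha> * x * y) / (x * (\<alpha> + \<alpha> * x + \<beta> * y + \<alpha> * \<beta> * x * y)))"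
  define H' where "H' = (\<lambda>x y::real. (- (x * (1 + x) * (1 + \<alpha> * x) * k)) / (x * (\<alpha> + \<alpha> * x + \<beta> * y + \<alpha> * \<beta> * x * y))^2)"
  define \<phi>2 where "\<phi>2 = (\<lambda>z. gbp_kernel lam b a \<alpha> 1 (fst z) * gbp_kernel (- lam) b a \<beta> 1 (snd z) * indicator C z)"
  define \<phi>1 where "\<phi>1 = (\<lambda>z. \<phi>2 (G (snd z) (fst z), snd z) * \<bar>G' (snd z) (fst z)\<bar> * indicator Bs z)"
  have Gmob: "G v x = ((- (1 + v)) + (\<beta> * v * (1 + v)) * x) / ((1 + \<beta> * v) + (- (\<alpha> * v * (1 + \<beta> * v))) * x)" for v x
  proof -
    have "(1 + v) * (\<beta> * v * x - 1) = (- (1 + v)) + (\<beta> * v * (1 + v)) * x" by (simp add: algebra_simps)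
    moreover have "(1 + \<beta> * v) * (1 - \<alpha> * v * x) = (1 + \<beta> * v) + (- (\<alpha> * v * (1 + \<beta> * v))) * x" by (simp add: algebra_simps)
    ultimately show ?thesis unfolding G_def by simp
  qed
  have Hmob: "H x y = ((1 + x) + (1 + \<alpha> * x) * y) / ((x * \<alpha> * (1 + x)) + (x * \<beta> * (1 + \<alpha> * x)) * y)" for x y
  proof -
    have "1 + x + y + \<alpha> * x * y = (1 + x) + (1 + \<alpha> * x) * y" by (simp add: algebra_simps)
    moreover have "x * (\<alpha> + \<alpha> * x + \<beta> * y + \<alpha> * \<beta> * x * y) = (x * \<alpha> * (1 + x)) + (x * \<beta> * (1 + \<alpha> * x)) * y" by (simp add: algebra_simps)
    ultimately show ?thesis unfolding H_def by simp
  qed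
  have Gden: "(1 + \<beta> * v) + (- (\<alpha> * v * (1 + \<beta> * v))) * x = (1 + \<beta> * v) * (1 - \<alpha> * v * x)" for v x
    by (simp add: algebra_simps)
  have Gdet: "(\<beta> * v * (1 + v)) * (1 + \<beta> * v) - (- (1 + v)) * (- (\<alpha> * v * (1 + \<beta> * v))) = v * (1 + v) * (1 + \<beta> * v) * k" for v
    by (simp add: k_def algebra_simps)
  have Hdet: "(1 + \<alpha> * x) * (x * \<alpha> * (1 + x)) - (1 + x) * (x * \<beta> * (1 + \<alpha> * x)) = - (x * (1 + x) * (1 + \<alpha> * x) * k)" for x
    by (simp add: k_def algebra_simps)
  have Qm[measurable]: "Q \<in> sets borel" unfolding Q_def by measurable
  have Bm[measurable]: "Bs \<in> sets borel" unfolding Bs_def by measurable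
  have [measurable]: "(\<lambda>z. G (snd z) (fst z)) \<in> borel_measurable borel" "(\<lambda>z. G' (snd z) (fst z)) \<in> borel_measurable borel"
    "(\<lambda>z. H (fst z) (snd z)) \<in> borel_measurable borel" "(\<lambda>z. H' (fst z) (snd z)) \<in> borel_measurable borel"
    unfolding G_def G'_def H_def H'_def by measurable
  have m2[measurable]: "\<phi>2 \<in> borel_measurable borel" unfolding \<phi>2_def by measurable
  have m1[measurable]: "\<phi>1 \<in> borel_measurable borel" unfolding \<phi>1_def by measurable
  have nn2: "\<And>z. 0 \<le> \<phi>2 z" unfolding \<phi>2_def using al be by (auto intro!: mult_nonneg_nonneg gbp_nonneg)
  have nn1: "\<And>z. 0 \<le> \<phi>1 z" unfolding \<phi>1_def using nn2 by auto
  have stepF: "(\<integral>\<^sup>+z. ennreal (\<phi>2 (G (snd z) (fst z), snd z) * \<bar>G' (snd z) (fst z)\<bar>) * indicator Bs z \<partial>(lborel \<Otimes>\<^sub>M lborel))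
       = (\<integral>\<^sup>+z. ennreal (\<phi>2 z) * indicator Q z \<partial>(lborel \<Otimes>\<^sub>M lborel))"
  proof (rule step_fst[OF Bm Qm nn2 m2])
    show "(\<lambda>z. \<phi>2 (G (snd z) (fst z), snd z) * \<bar>G' (snd z) (fst z)\<bar>) \<in> borel_measurable borel" by measurable
    fix x v :: real
    assume "(x, v) \<in> Bs"
    then have "\<alpha> * x * v \<noteq> 1" by (auto simp: Bs_def)
    moreover have "0 < v" using \<open>(x, v) \<in> Bs\<close> by (simp add: Bs_def)
    ultimately have dn: "(1 + \<beta> * v) + (- (\<alpha> * v * (1 + \<beta> * v))) * x \<noteq> 0"
      using mult_pos_pos[OF be, of v] unfolding Gden by (auto simp: mult_ac)
    have "((\<lambda>x. ((- (1 + v)) + (\<beta> * v * (1 + v)) * x) / ((1 + \<beta> * v) + (- (\<alpha> * v * (1 + \<beta> * v))) * x)) has_real_derivative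
        ((\<beta> * v * (1 + v)) * (1 + \<beta> * v) - (- (1 + v)) * (- (\<alpha> * v * (1 + \<beta> * v)))) / ((1 + \<beta> * v) + (- (\<alpha> * v * (1 + \<beta> * v))) * x)^2) (at x)"
      by (rule mob_der[OF dn])
    moreover have "((\<beta> * v * (1 + v)) * (1 + \<beta> * v) - (- (1 + v)) * (- (\<alpha> * v * (1 + \<beta> * v)))) / ((1 + \<beta> * v) + (- (\<alpha> * v * (1 + \<beta> * v))) * x)^2
        = G' v x" by (simp only: Gdet Gden G'_def)
    moreover have "(\<lambda>x. G v x) = (\<lambda>x. ((- (1 + v)) + (\<beta> * v * (1 + v)) * x) / ((1 + \<beta> * v) + (- (\<alpha> * v * (1 + \<beta> * v))) * x))"
      by (rule ext) (rule Gmob)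
    ultimately have "((\<lambda>x. G v x) has_real_derivative G' v x) (at x)" by simp
    then show "(G v has_real_derivative G' v x) (at x within {x. (x, v) \<in> Bs})"
      by (rule has_field_derivative_at_within)
  next
    fix v :: real
    show "inj_on (G v) {x. (x, v) \<in> Bs}"
    proof (rule inj_onI)
      fix x1 x2 assume h: "x1 \<in> {x. (x, v) \<in> Bs}" "x2 \<in> {x. (x, v) \<in> Bs}" "G v x1 = G v x2"
      have dnz: "(1 + \<beta> * v) + (- (\<alpha> * v * (1 + \<beta> * v))) * x \<noteq> 0" if "(x, v) \<in> Bs" for x
      proof -
        have "\<alpha> * x * v \<noteq> 1" using that by (auto simp: Bs_def)
        moreover have "0 < v" using that by (simp add: Bs_def)
        ultimately show ?thesis using mult_pos_pos[OF be, of v] unfolding Gden by (auto simp: mult_ac)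
      qed
      have vp: "0 < v" using h by (auto simp: Bs_def)
      have "v * (1 + v) * (1 + \<beta> * v) * k \<noteq> 0" using vp be k0 onep[OF be vp] by simp
      then show "x1 = x2"
        using mob_inj[of "\<beta> * v * (1 + v)" "1 + \<beta> * v" "- (1 + v)" "- (\<alpha> * v * (1 + \<beta> * v))" x1 x2]
          dnz h Gmob Gdet by auto
    qed
    show "G v ` {x. (x, v) \<in> Bs} = {u. (u, v) \<in> Q}"
    proof (intro equalityI subsetI)
      fix u assume "u \<in> G v ` {x. (x, v) \<in> Bs}"
      then obtain x where xB: "(x, v) \<in> Bs" and u: "u = G v x" by auto
      then have x: "0 < x" "0 < v" and pr: "(\<alpha> * x * v - 1) * (\<beta> * x * v - 1) < 0" by (auto simp: Bs_def)
      have "0 < ((1 + v) * (\<beta> * v * x - 1)) * ((1 + \<beta> * v) * (1 - \<alpha> * v * x))"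
      proof -
        have "0 < (\<beta> * v * x - 1) * (1 - \<alpha> * v * x)" using pr by (simp add: algebra_simps)
        moreover have "0 < (1 + v) * (1 + \<beta> * v)" using x be by (simp add: add_pos_pos)
        ultimately have "0 < ((1 + v) * (1 + \<beta> * v)) * ((\<beta> * v * x - 1) * (1 - \<alpha> * v * x))" by simp
        then show ?thesis by (simp add: algebra_simps)
      qed
      then have "0 < G v x" unfolding G_def by (rule pos_div_of_prod)
      then show "u \<in> {u. (u, v) \<in> Q}" using x u by (simp add: Q_def)
    next
      fix u assume "u \<in> {u. (u, v) \<in> Q}"
      then have u: "0 < u" "0 < v" by (auto simp: Q_def)
      define Dn where "Dn = \<beta> * (1 + v) + \<alpha> * u * (1 + \<beta> * v)"
      have Dnp: "0 < Dn" using u al be by (simp add: Dn_def add_pos_pos)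
      define x where "x = (u * (1 + \<beta> * v) + 1 + v) / (v * Dn)"
      have x0: "0 < x" using u be Dnp by (simp add: x_def add_pos_pos)
      have ex1: "\<alpha> * x * v - 1 = (\<alpha> - \<beta>) * (1 + v) / Dn"
        using u Dnp unfolding x_def by (simp add: field_simps) (simp add: Dn_def algebra_simps)
      have ex2: "\<beta> * x * v - 1 = u * (\<beta> - \<alpha>) * (1 + \<beta> * v) / Dn"
        using u Dnp unfolding x_def by (simp add: field_simps) (simp add: Dn_def algebra_simps)
      have "(\<alpha> * x * v - 1) * (\<beta> * x * v - 1) = - ((\<alpha> - \<beta>)^2 * (u * (1 + v) * (1 + \<beta> * v))) / Dn^2"
        unfolding ex1 ex2 by (simp add: power2_eq_square field_simps)
      moreover have "0 < (\<alpha> - \<beta>)^2 * (u * (1 + v) * (1 + \<beta> * v)) / Dn^2"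
        using ne u be Dnp by (simp add: add_pos_pos)
      ultimately have "(\<alpha> * x * v - 1) * (\<beta> * x * v - 1) < 0" by linarith
      then have xB: "(x, v) \<in> Bs" using x0 u by (simp add: Bs_def)
      have "G v x = u"
      proof -
        have e1: "\<beta> * v * x - 1 = u * (\<beta> - \<alpha>) * (1 + \<beta> * v) / Dn" using ex2 by (simp add: mult_ac)
        have e2: "1 - \<alpha> * v * x = (\<beta> - \<alpha>) * (1 + v) / Dn"
        proof -
          have "1 - \<alpha> * v * x = - (\<alpha> * x * v - 1)" by (simp add: mult_ac)
          also have "\<dots> = (\<beta> - \<alpha>) * (1 + v) / Dn" unfolding ex1 using Dnp by (simp add: field_simps)
          finally show ?thesis .
        qed
        have "(\<beta> - \<alpha>) \<noteq> 0" using ne by simp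
        then show ?thesis unfolding G_def e1 e2 by (rule canc4[rotated 2]) (use u Dnp onep[OF be u(2)] in auto)
      qed
      then show "u \<in> G v ` {x. (x, v) \<in> Bs}" using xB by force
    qed
  qed
  have Hden: "(x * \<alpha> * (1 + x)) + (x * \<beta> * (1 + \<alpha> * x)) * y = x * (\<alpha> + \<alpha> * x + \<beta> * y + \<alpha> * \<beta> * x * y)" for x y
    by (simp add: algebra_simps)
  have D2pos: "0 < \<alpha> + \<alpha> * x + \<beta> * y + \<alpha> * \<beta> * x * y" if "0 < x" "0 < y" for x y
    using that al be by (simp add: add_pos_pos)
  have ev1: "\<alpha> * x * H x y - 1 = - (y * k * (1 + \<alpha> * x)) / (\<alpha> + \<alpha> * x + \<beta> * y + \<alpha> * \<beta> * x * y)"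
    and ev2: "\<beta> * x * H x y - 1 = k * (1 + x) / (\<alpha> + \<alpha> * x + \<beta> * y + \<alpha> * \<beta> * x * y)"
    and ev3: "1 + H x y = (1 + \<alpha> * x) * (1 + x + y + \<beta> * x * y) / (x * (\<alpha> + \<alpha> * x + \<beta> * y + \<alpha> * \<beta> * x * y))"
    and ev4: "1 + \<beta> * H x y = (1 + x) * (\<beta> + \<alpha> * x + \<beta> * y + \<alpha> * \<beta> * x * y) / (x * (\<alpha> + \<alpha> * x + \<beta> * y + \<alpha> * \<beta> * x * y))"
    and ev5: "1 - \<alpha> * H x y * x = y * k * (1 + \<alpha> * x) / (\<alpha> + \<alpha> * x + \<beta> * y + \<alpha> * \<beta> * x * y)"
    and ev6: "\<beta> * H x y * x - 1 = k * (1 + x) / (\<alpha> + \<alpha> * x + \<beta> * y + \<alpha> * \<beta> * x * y)"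
    if xy: "0 < x" "0 < y" for x y
  proof -
    define Dd where "Dd = \<alpha> + \<alpha> * x + \<beta> * y + \<alpha> * \<beta> * x * y"
    define Qq where "Qq = 1 + x + y + \<alpha> * x * y"
    have d: "Dd \<noteq> 0" using D2pos[OF xy] by (simp add: Dd_def)
    have xn: "x \<noteq> 0" using xy by simp
    have Hx: "H x y = Qq / (x * Dd)" unfolding H_def Qq_def Dd_def ..
    have p1: "\<alpha> * Qq - Dd = - (y * k * (1 + \<alpha> * x))" unfolding Qq_def Dd_def k_def by (simp add: algebra_simps)
    have p2: "\<beta> * Qq - Dd = k * (1 + x)" unfolding Qq_def Dd_def k_def by (simp add: algebra_simps)
    have p3: "x * Dd + Qq = (1 + \<alpha> * x) * (1 + x + y + \<beta> * x * y)" unfolding Qq_def Dd_def by (simp add: algebra_simps)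
    have p4: "x * Dd + \<beta> * Qq = (1 + x) * (\<beta> + \<alpha> * x + \<beta> * y + \<alpha> * \<beta> * x * y)" unfolding Qq_def Dd_def by (simp add: algebra_simps)
    have p5: "Dd - \<alpha> * Qq = y * k * (1 + \<alpha> * x)" unfolding Qq_def Dd_def k_def by (simp add: algebra_simps)
    show "\<alpha> * x * H x y - 1 = - (y * k * (1 + \<alpha> * x)) / (\<alpha> + \<alpha> * x + \<beta> * y + \<alpha> * \<beta> * x * y)"
      by (simp only: Hx hlp1[OF xn d] p1) (simp only: Dd_def)
    show "\<beta> * x * H x y - 1 = k * (1 + x) / (\<alpha> + \<alpha> * x + \<beta> * y + \<alpha> * \<beta> * x * y)"
      by (simp only: Hx hlp1[OF xn d] p2) (simp only: Dd_def)
    show "1 + H x y = (1 + \<alpha> * x) * (1 + x + y + \<beta> * x * y) / (x * (\<alpha> + \<alpha> * x + \<beta> * y + \<alpha> * \<beta> * x * y))"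
      by (simp only: Hx hlp2[OF xn d] p3) (simp only: Dd_def)
    show "1 + \<beta> * H x y = (1 + x) * (\<beta> + \<alpha> * x + \<beta> * y + \<alpha> * \<beta> * x * y) / (x * (\<alpha> + \<alpha> * x + \<beta> * y + \<alpha> * \<beta> * x * y))"
      by (simp only: Hx hlp3[OF xn d] p4) (simp only: Dd_def)
    show "1 - \<alpha> * H x y * x = y * k * (1 + \<alpha> * x) / (\<alpha> + \<alpha> * x + \<beta> * y + \<alpha> * \<beta> * x * y)"
      by (simp only: Hx hlp4[OF xn d] p5) (simp only: Dd_def)
    show "\<beta> * H x y * x - 1 = k * (1 + x) / (\<alpha> + \<alpha> * x + \<beta> * y + \<alpha> * \<beta> * x * y)"
      by (simp only: Hx hlp5[OF xn d] p2) (simp only: Dd_def)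
  qed
  have Hpos: "0 < H x y" if "0 < x" "0 < y" for x y
    unfolding H_def using that D2pos[OF that] al by (simp add: add_pos_pos)
  have HinB: "(x, H x y) \<in> Bs" if xy: "0 < x" "0 < y" for x y
  proof -
    have d: "0 < \<alpha> + \<alpha> * x + \<beta> * y + \<alpha> * \<beta> * x * y" using D2pos[OF xy] .
    have "(\<alpha> * x * H x y - 1) * (\<beta> * x * H x y - 1) = - (y * k^2 * (1 + \<alpha> * x) * (1 + x)) / (\<alpha> + \<alpha> * x + \<beta> * y + \<alpha> * \<beta> * x * y)^2"
      unfolding ev1[OF xy] ev2[OF xy] by (simp add: power2_eq_square field_simps)
    moreover have "0 < (y * k^2 * (1 + \<alpha> * x) * (1 + x)) / (\<alpha> + \<alpha> * x + \<beta> * y + \<alpha> * \<beta> * x * y)^2"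
      using xy k0 d onep[OF al xy(1)] by simp
    ultimately show ?thesis using xy Hpos[OF xy] by (simp add: Bs_def)
  qed
  have stepS: "(\<integral>\<^sup>+z. ennreal (\<phi>1 (fst z, H (fst z) (snd z)) * \<bar>H' (fst z) (snd z)\<bar>) * indicator Q z \<partial>(lborel \<Otimes>\<^sub>M lborel))
       = (\<integral>\<^sup>+z. ennreal (\<phi>1 z) * indicator Bs z \<partial>(lborel \<Otimes>\<^sub>M lborel))"
  proof (rule step_snd[OF Qm Bm nn1 m1])
    show "(\<lambda>z. \<phi>1 (fst z, H (fst z) (snd z)) * \<bar>H' (fst z) (snd z)\<bar>) \<in> borel_measurable borel" by measurable
    fix x y :: real
    assume "(x, y) \<in> Q"
    then have xy: "0 < x" "0 < y" by (auto simp: Q_def)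
    have dn: "(x * \<alpha> * (1 + x)) + (x * \<beta> * (1 + \<alpha> * x)) * y \<noteq> 0"
      unfolding Hden using xy D2pos[OF xy] by simp
    have "((\<lambda>y. ((1 + x) + (1 + \<alpha> * x) * y) / ((x * \<alpha> * (1 + x)) + (x * \<beta> * (1 + \<alpha> * x)) * y)) has_real_derivative
        ((1 + \<alpha> * x) * (x * \<alpha> * (1 + x)) - (1 + x) * (x * \<beta> * (1 + \<alpha> * x))) / ((x * \<alpha> * (1 + x)) + (x * \<beta> * (1 + \<alpha> * x)) * y)^2) (at y)"
      by (rule mob_der[OF dn])
    moreover have "((1 + \<alpha> * x) * (x * \<alpha> * (1 + x)) - (1 + x) * (x * \<beta> * (1 + \<alpha> * x))) / ((x * \<alpha> * (1 + x)) + (x * \<beta> * (1 + \<alpha> * x)) * y)^2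
        = H' x y" by (simp only: Hdet Hden H'_def)
    moreover have "(\<lambda>y. H x y) = (\<lambda>y. ((1 + x) + (1 + \<alpha> * x) * y) / ((x * \<alpha> * (1 + x)) + (x * \<beta> * (1 + \<alpha> * x)) * y))"
      by (rule ext) (rule Hmob)
    ultimately have "((\<lambda>y. H x y) has_real_derivative H' x y) (at y)" by simp
    then show "(H x has_real_derivative H' x y) (at y within {y. (x, y) \<in> Q})"
      by (rule has_field_derivative_at_within)
  next
    fix x :: real
    show "inj_on (H x) {y. (x, y) \<in> Q}"
    proof (rule inj_onI)
      fix y1 y2 assume h: "y1 \<in> {y. (x, y) \<in> Q}" "y2 \<in> {y. (x, y) \<in> Q}" "H x y1 = H x y2"
      have dnz: "(x * \<alpha> * (1 + x)) + (x * \<beta> * (1 + \<alpha> * x)) * y \<noteq> 0" if "(x, y) \<in> Q" for y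
      proof -
        have xy: "0 < x" "0 < y" using that by (auto simp: Q_def)
        show ?thesis unfolding Hden using xy D2pos[OF xy] by simp
      qed
      have xp: "0 < x" using h by (auto simp: Q_def)
      have "- (x * (1 + x) * (1 + \<alpha> * x) * k) \<noteq> 0" using xp k0 onep[OF al xp] by simp
      then show "y1 = y2"
        using mob_inj[of "1 + \<alpha> * x" "x * \<alpha> * (1 + x)" "1 + x" "x * \<beta> * (1 + \<alpha> * x)" y1 y2]
          dnz h Hmob Hdet by auto
    qed
    show "H x ` {y. (x, y) \<in> Q} = {v. (x, v) \<in> Bs}"
    proof (intro equalityI subsetI)
      fix v assume "v \<in> H x ` {y. (x, y) \<in> Q}"
      then obtain y where "(x, y) \<in> Q" "v = H x y" by auto
      then show "v \<in> {v. (x, v) \<in> Bs}" using HinB by (auto simp: Q_def)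
    next
      fix v assume "v \<in> {v. (x, v) \<in> Bs}"
      then have xv: "0 < x" "0 < v" and pr: "(\<alpha> * x * v - 1) * (\<beta> * x * v - 1) < 0" by (auto simp: Bs_def)
      define A0 where "A0 = 1 + x"
      define B0 where "B0 = 1 + \<alpha> * x"
      define C0 where "C0 = x * \<alpha> * (1 + x)"
      define D0 where "D0 = x * \<beta> * (1 + \<alpha> * x)"
      define y where "y = (A0 - v * C0) / (v * D0 - B0)"
      have n1: "A0 - v * C0 = (1 + x) * (1 - \<alpha> * x * v)" by (simp add: A0_def C0_def algebra_simps)
      have n2: "v * D0 - B0 = (1 + \<alpha> * x) * (\<beta> * x * v - 1)" by (simp add: D0_def B0_def algebra_simps)
      have "0 < ((1 + x) * (1 - \<alpha> * x * v)) * ((1 + \<alpha> * x) * (\<beta> * x * v - 1))"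
      proof -
        have "0 < (1 - \<alpha> * x * v) * (\<beta> * x * v - 1)" using pr by (simp add: algebra_simps)
        moreover have "0 < (1 + x) * (1 + \<alpha> * x)" using xv onep[OF al xv(1)] by simp
        ultimately have "0 < ((1 + x) * (1 + \<alpha> * x)) * ((1 - \<alpha> * x * v) * (\<beta> * x * v - 1))" by simp
        then show ?thesis by (simp add: algebra_simps)
      qed
      then have y0: "0 < y" unfolding y_def n1 n2 by (rule pos_div_of_prod)
      have nzd: "v * D0 - B0 \<noteq> 0" unfolding n2 using pr onep[OF al xv(1)] by auto
      have det: "B0 * C0 - A0 * D0 \<noteq> 0" unfolding A0_def B0_def C0_def D0_def using Hdet[of x] xv k0 onep[OF al xv(1)] by simp
      have "H x y = v" unfolding Hmob y_def using mob_inv(1)[OF nzd det] by (simp add: A0_def B0_def C0_def D0_def)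
      then show "v \<in> H x ` {y. (x, y) \<in> Q}" using y0 xv by (force simp: Q_def)
    qed
  qed
  have "(\<integral>\<^sup>+z. ennreal (gbp_kernel lam b a \<alpha> 1 (fst z) * gbp_kernel (- lam) b a \<beta> 1 (snd z)) * indicator C z \<partial>(lborel \<Otimes>\<^sub>M lborel))
      = (\<integral>\<^sup>+z. ennreal (\<phi>2 z) * indicator Q z \<partial>(lborel \<Otimes>\<^sub>M lborel))"
    by (intro nn_integral_cong) (auto simp: \<phi>2_def Q_def indicator_def gbp_kernel_def)
  also have "\<dots> = (\<integral>\<^sup>+z. ennreal (\<phi>1 z) * indicator Bs z \<partial>(lborel \<Otimes>\<^sub>M lborel))"
    unfolding stepF[symmetric] by (intro nn_integral_cong) (auto simp: \<phi>1_def indicator_def)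
  also have "\<dots> = (\<integral>\<^sup>+z. ennreal (\<phi>1 (fst z, H (fst z) (snd z)) * \<bar>H' (fst z) (snd z)\<bar>) * indicator Q z \<partial>(lborel \<Otimes>\<^sub>M lborel))"
    by (rule stepS[symmetric])
  also have "\<dots> = (\<integral>\<^sup>+z. ennreal (gbp_kernel lam a b \<alpha> 1 (fst z) * gbp_kernel (- lam) a b \<beta> 1 (snd z)) * indicator C (HI \<alpha> \<beta> (fst z) (snd z)) \<partial>(lborel \<Otimes>\<^sub>M lborel))"
  proof (intro nn_integral_cong)
    fix z :: "real \<times> real"
    obtain x y where z: "z = (x, y)" by (cases z)
    show "ennreal (\<phi>1 (fst z, H (fst z) (snd z)) * \<bar>H' (fst z) (snd z)\<bar>) * indicator Q z =
          ennreal (gbp_kernel lam a b \<alpha> 1 (fst z) * gbp_kernel (- lam) a b \<beta> 1 (snd z)) * indicator C (HI \<alpha> \<beta> (fst z) (snd z))"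
    proof (cases "0 < x \<and> 0 < y")
      case False
      then show ?thesis by (auto simp: z Q_def gbp_kernel_def)
    next
      case True
      then have xy: "0 < x" "0 < y" by auto
      define v where "v = H x y"
      define P where "P = 1 + x + y + \<beta> * x * y"
      define D1 where "D1 = \<beta> + \<alpha> * x + \<beta> * y + \<alpha> * \<beta> * x * y"
      define D2 where "D2 = \<alpha> + \<alpha> * x + \<beta> * y + \<alpha> * \<beta> * x * y"
      define Qv where "Qv = 1 + x + y + \<alpha> * x * y"
      have pos: "0 < P" "0 < D1" "0 < D2" "0 < Qv" "0 < 1 + x" "0 < 1 + \<alpha> * x"
        unfolding P_def D1_def D2_def Qv_def using xy al be onep[OF al xy(1)] by (simp_all add: add_pos_pos)
      have vQ: "v = Qv / (x * D2)" unfolding v_def H_def Qv_def D2_def ..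
      have Gv: "G v x = P / (y * D1)"
      proof -
        have "G v x = (((1 + \<alpha> * x) * P / (x * D2)) * (k * (1 + x) / D2)) / (((1 + x) * D1 / (x * D2)) * (y * k * (1 + \<alpha> * x) / D2))"
          unfolding G_def v_def ev3[OF xy] ev6[OF xy] ev4[OF xy] ev5[OF xy] P_def D1_def D2_def ..
        also have "\<dots> = P / (y * D1)" by (rule G_a_abs) (use xy pos k0 in auto)
        finally show ?thesis .
      qed
      have HIeq: "HI \<alpha> \<beta> x y = (G v x, v)"
      proof -
        have "HI \<alpha> \<beta> x y = (P / (y * D1), v)" unfolding v_def HI_def H_def P_def D1_def by simp
        then show ?thesis by (simp only: Gv)
      qed
      have GH: "G' v x * H' x y = - (P * Qv / (x^2 * y^2 * D1 * D2))"
      proof -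
        have ev3': "1 + v = (1 + \<alpha> * x) * P / (x * D2)" using ev3[OF xy] by (simp only: v_def P_def D2_def)
        have ev4': "1 + \<beta> * v = (1 + x) * D1 / (x * D2)" using ev4[OF xy] by (simp only: v_def D1_def D2_def)
        have ev5': "1 - \<alpha> * v * x = y * k * (1 + \<alpha> * x) / D2" using ev5[OF xy] by (simp only: v_def D2_def)
        have "G' v x * H' x y = (v * (1 + v) * (1 + \<beta> * v) * k) / ((1 + \<beta> * v) * (1 - \<alpha> * v * x))^2
             * (- (x * (1 + x) * (1 + \<alpha> * x) * k) / (x * D2)^2)"
          unfolding G'_def H'_def D2_def ..
        also have "\<dots> = (Qv / (x * D2)) * ((1 + \<alpha> * x) * P / (x * D2)) * ((1 + x) * D1 / (x * D2)) * k / (((1 + x) * D1 / (x * D2)) * (y * k * (1 + \<alpha> * x) / D2))^2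
          * (- (x * (1 + x) * (1 + \<alpha> * x) * k) / (x * D2)^2)"
          unfolding ev3' ev4' ev5' unfolding vQ ..
        also have "\<dots> = - (P * Qv / (x^2 * y^2 * D1 * D2))"
          by (rule J_a_abs) (use xy pos k0 in auto)
        finally show ?thesis .
      qed
      have absGH: "\<bar>G' v x\<bar> * \<bar>H' x y\<bar> = P * Qv / (x^2 * y^2 * D1 * D2)"
        unfolding abs_mult[symmetric] GH using xy pos by simp
      have ID: "gbp_kernel lam b a \<alpha> 1 (G v x) * gbp_kernel (- lam) b a \<beta> 1 v * (P * Qv / (x^2 * y^2 * D1 * D2))
           = gbp_kernel lam a b \<alpha> 1 x * gbp_kernel (- lam) a b \<beta> 1 y"
        unfolding Gv unfolding vQ unfolding P_def Qv_def D1_def D2_def by (rule identity_a[OF al be xy])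
      have "\<phi>1 (x, H x y) * \<bar>H' x y\<bar> = gbp_kernel lam a b \<alpha> 1 x * gbp_kernel (- lam) a b \<beta> 1 y * indicator C (HI \<alpha> \<beta> x y)"
      proof -
        have "\<phi>1 (x, H x y) * \<bar>H' x y\<bar> = gbp_kernel lam b a \<alpha> 1 (G v x) * gbp_kernel (- lam) b a \<beta> 1 v * indicator C (G v x, v) * (\<bar>G' v x\<bar> * \<bar>H' x y\<bar>)"
          unfolding \<phi>1_def \<phi>2_def v_def[symmetric] using HinB[OF xy] by (simp add: v_def mult_ac)
        also have "\<dots> = gbp_kernel lam a b \<alpha> 1 x * gbp_kernel (- lam) a b \<beta> 1 y * indicator C (HI \<alpha> \<beta> x y)"
          unfolding absGH HIeq ID[symmetric] by (simp add: mult_ac)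
        finally show ?thesis .
      qed
      then show ?thesis using xy by (simp add: z Q_def indicator_def)
    qed
  qed
  finally show ?thesis by simp
qed

lemma swap_nn:
  fixes f :: "real \<times> real \<Rightarrow> ennreal"
  assumes [measurable]: "f \<in> borel_measurable borel"
  shows "(\<integral>\<^sup>+z. f z \<partial>(lborel \<Otimes>\<^sub>M lborel)) = (\<integral>\<^sup>+z. f (snd z, fst z) \<partial>(lborel \<Otimes>\<^sub>M lborel))"
proof -
  have m1: "f \<in> borel_measurable (lborel \<Otimes>\<^sub>M lborel)" by (simp add: lborel_prod)
  have m2: "(\<lambda>z. f (snd z, fst z)) \<in> borel_measurable (lborel \<Otimes>\<^sub>M lborel)"
    unfolding lborel_prod by measurable
  have "(\<integral>\<^sup>+z. f z \<partial>(lborel \<Otimes>\<^sub>M lborel)) = (\<integral>\<^sup>+y. \<integral>\<^sup>+x. f (x, y) \<partial>lborel \<partial>lborel)"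
    using lborel_pair.nn_integral_snd[OF m1] by simp
  also have "\<dots> = (\<integral>\<^sup>+z. f (snd z, fst z) \<partial>(lborel \<Otimes>\<^sub>M lborel))"
    using lborel.nn_integral_fst[OF m2] by simp
  finally show ?thesis .
qed

lemma inv_der: assumes "y \<noteq> 0" "0 < \<alpha>"
  shows "((\<lambda>y. 1 / (\<alpha> * y)) has_real_derivative - 1 / (\<alpha> * y^2)) (at y)"
  using assms by (auto intro!: derivative_eq_intros simp: power2_eq_square field_simps)

lemma inv_img:
  assumes "0 < (\<alpha>::real)"
  shows "(\<lambda>y. 1 / (\<alpha> * y)) ` {y. 0 < y} = {w. 0 < w}"
proof (intro equalityI subsetI)
  fix w assume "w \<in> (\<lambda>y. 1 / (\<alpha> * y)) ` {y. 0 < y}" then show "w \<in> {w. 0 < w}" using assms by auto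
next
  fix w assume "w \<in> {w. 0 < (w::real)}"
  then have w: "0 < w" by simp
  then have "1 / (\<alpha> * (1 / (\<alpha> * w))) = w" "0 < 1 / (\<alpha> * w)" using assms by simp_all
  then show "w \<in> (\<lambda>y. 1 / (\<alpha> * y)) ` {y. 0 < y}" by (metis (mono_tags, lifting) image_eqI mem_Collect_eq)
qed

lemma key_a_eq:
  fixes \<alpha> lam a b :: real and C :: "(real \<times> real) set"
  assumes al: "0 < \<alpha>" and C[measurable]: "C \<in> sets (borel :: (real \<times> real) measure)"
  shows "(\<integral>\<^sup>+z. ennreal (gbp_kernel lam a b \<alpha> 1 (fst z) * gbp_kernel (- lam) a b \<alpha> 1 (snd z)) * indicator C (HI \<alpha> \<alpha> (fst z) (snd z)) \<partial>(lborel \<Otimes>\<^sub>M lborel))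
       = (\<integral>\<^sup>+z. ennreal (gbp_kernel lam b a \<alpha> 1 (fst z) * gbp_kernel (- lam) b a \<alpha> 1 (snd z)) * indicator C z \<partial>(lborel \<Otimes>\<^sub>M lborel))"
proof -
  define Q where "Q = {z :: real \<times> real. 0 < fst z \<and> 0 < snd z}"
  define I where "I = (\<lambda>y::real. 1 / (\<alpha> * y))"
  define I' where "I' = (\<lambda>y::real. - 1 / (\<alpha> * y^2))"
  define \<psi> where "\<psi> = (\<lambda>z. gbp_kernel lam b a \<alpha> 1 (snd z) * gbp_kernel (- lam) b a \<alpha> 1 (fst z) * indicator C (snd z, fst z))"
  define \<psi>1 where "\<psi>1 = (\<lambda>z. \<psi> (I (fst z), snd z) * \<bar>I' (fst z)\<bar> * indicator Q z)"
  have Qm[measurable]: "Q \<in> sets borel" unfolding Q_def by measurable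
  have [measurable]: "I \<in> borel_measurable borel" "I' \<in> borel_measurable borel" unfolding I_def I'_def by measurable
  have mp[measurable]: "\<psi> \<in> borel_measurable borel" unfolding \<psi>_def by measurable
  have mp1[measurable]: "\<psi>1 \<in> borel_measurable borel" unfolding \<psi>1_def by measurable
  have nnp: "\<And>z. 0 \<le> \<psi> z" unfolding \<psi>_def using al by (auto intro!: mult_nonneg_nonneg gbp_nonneg)
  have nnp1: "\<And>z. 0 \<le> \<psi>1 z" unfolding \<psi>1_def using nnp by auto
  have sl1: "{x. (x, w) \<in> Q} = (if 0 < w then {x. 0 < x} else {})" for w by (auto simp: Q_def)
  have sl2: "{y. (x, y) \<in> Q} = (if 0 < x then {y. 0 < y} else {})" for x by (auto simp: Q_def)
  have injI: "inj_on I {y. 0 < y}" unfolding I_def by (rule inj_onI) (use al in auto)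
  define Gc where "Gc = (\<lambda>w::real. I)"
  define Gc' where "Gc' = (\<lambda>w::real. I')"
  have imgI: "I ` {x. (x, y) \<in> Q} = {u. (u, y) \<in> Q}" "I ` {x. (y, x) \<in> Q} = {u. (y, u) \<in> Q}" for y
  proof -
    show "I ` {x. (x, y) \<in> Q} = {u. (u, y) \<in> Q}"
    proof (cases "0 < y")
      case True
      then show ?thesis using inv_img[OF al] by (simp add: Q_def I_def)
    qed (simp add: Q_def)
    show "I ` {x. (y, x) \<in> Q} = {u. (y, u) \<in> Q}"
    proof (cases "0 < y")
      case True
      then show ?thesis using inv_img[OF al] by (simp add: Q_def I_def)
    qed (simp add: Q_def)
  qed
  have injI2: "inj_on I {x. (x, y) \<in> Q}" "inj_on I {x. (y, x) \<in> Q}" for y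
    by (rule inj_on_subset[OF injI]; force simp: Q_def)+
  have derI: "(I has_real_derivative I' x) (at x within S)" if "x \<noteq> 0" for x S
    unfolding I_def I'_def by (rule has_field_derivative_at_within[OF inv_der[OF that al]])
  have stepF: "(\<integral>\<^sup>+z. ennreal (\<psi> (Gc (snd z) (fst z), snd z) * \<bar>Gc' (snd z) (fst z)\<bar>) * indicator Q z \<partial>(lborel \<Otimes>\<^sub>M lborel))
       = (\<integral>\<^sup>+z. ennreal (\<psi> z) * indicator Q z \<partial>(lborel \<Otimes>\<^sub>M lborel))"
  proof (rule step_fst[OF Qm Qm nnp mp])
    show "(\<lambda>z. \<psi> (Gc (snd z) (fst z), snd z) * \<bar>Gc' (snd z) (fst z)\<bar>) \<in> borel_measurable borel"
      unfolding Gc_def Gc'_def by measurable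
    fix x y :: real assume "(x, y) \<in> Q"
    then have "x \<noteq> 0" by (simp add: Q_def)
    then show "(Gc y has_real_derivative Gc' y x) (at x within {x. (x, y) \<in> Q})"
      unfolding Gc_def Gc'_def by (rule derI)
  next
    fix y :: real
    show "inj_on (Gc y) {x. (x, y) \<in> Q}" unfolding Gc_def by (rule injI2)
    show "Gc y ` {x. (x, y) \<in> Q} = {u. (u, y) \<in> Q}" unfolding Gc_def by (rule imgI)
  qed
  have stepS: "(\<integral>\<^sup>+z. ennreal (\<psi>1 (fst z, Gc (fst z) (snd z)) * \<bar>Gc' (fst z) (snd z)\<bar>) * indicator Q z \<partial>(lborel \<Otimes>\<^sub>M lborel))
       = (\<integral>\<^sup>+z. ennreal (\<psi>1 z) * indicator Q z \<partial>(lborel \<Otimes>\<^sub>M lborel))"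
  proof (rule step_snd[OF Qm Qm nnp1 mp1])
    show "(\<lambda>z. \<psi>1 (fst z, Gc (fst z) (snd z)) * \<bar>Gc' (fst z) (snd z)\<bar>) \<in> borel_measurable borel"
      unfolding Gc_def Gc'_def by measurable
    fix x y :: real assume "(x, y) \<in> Q"
    then have "y \<noteq> 0" by (simp add: Q_def)
    then show "(Gc x has_real_derivative Gc' x y) (at y within {y. (x, y) \<in> Q})"
      unfolding Gc_def Gc'_def by (rule derI)
  next
    fix x :: real
    show "inj_on (Gc x) {y. (x, y) \<in> Q}" unfolding Gc_def by (rule injI2)
    show "Gc x ` {y. (x, y) \<in> Q} = {v. (x, v) \<in> Q}" unfolding Gc_def by (rule imgI)
  qed
  have "(\<integral>\<^sup>+z. ennreal (gbp_kernel lam b a \<alpha> 1 (fst z) * gbp_kernel (- lam) b a \<alpha> 1 (snd z)) * indicator C z \<partial>(lborel \<Otimes>\<^sub>M lborel))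
      = (\<integral>\<^sup>+z. ennreal (\<psi> (snd z, fst z)) * indicator Q (snd z, fst z) \<partial>(lborel \<Otimes>\<^sub>M lborel))"
    by (intro nn_integral_cong) (auto simp: \<psi>_def Q_def indicator_def gbp_kernel_def)
  also have "\<dots> = (\<integral>\<^sup>+z. ennreal (\<psi> z) * indicator Q z \<partial>(lborel \<Otimes>\<^sub>M lborel))"
    by (rule swap_nn[symmetric, where f = "\<lambda>z. ennreal (\<psi> z) * indicator Q z", simplified]) measurable
  also have "\<dots> = (\<integral>\<^sup>+z. ennreal (\<psi>1 z) * indicator Q z \<partial>(lborel \<Otimes>\<^sub>M lborel))"
    unfolding stepF[symmetric] by (intro nn_integral_cong) (auto simp: \<psi>1_def indicator_def Gc_def Gc'_def)
  also have "\<dots> = (\<integral>\<^sup>+z. ennreal (\<psi>1 (fst z, Gc (fst z) (snd z)) * \<bar>Gc' (fst z) (snd z)\<bar>) * indicator Q z \<partial>(lborel \<Otimes>\<^sub>M lborel))"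
    by (rule stepS[symmetric])
  also have "\<dots> = (\<integral>\<^sup>+z. ennreal (gbp_kernel lam a b \<alpha> 1 (fst z) * gbp_kernel (- lam) a b \<alpha> 1 (snd z)) * indicator C (HI \<alpha> \<alpha> (fst z) (snd z)) \<partial>(lborel \<Otimes>\<^sub>M lborel))"
  proof (intro nn_integral_cong)
    fix z :: "real \<times> real"
    obtain x y where z: "z = (x, y)" by (cases z)
    show "ennreal (\<psi>1 (fst z, Gc (fst z) (snd z)) * \<bar>Gc' (fst z) (snd z)\<bar>) * indicator Q z =
          ennreal (gbp_kernel lam a b \<alpha> 1 (fst z) * gbp_kernel (- lam) a b \<alpha> 1 (snd z)) * indicator C (HI \<alpha> \<alpha> (fst z) (snd z))"
    proof (cases "0 < x \<and> 0 < y")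
      case False
      then show ?thesis by (auto simp: z Q_def gbp_kernel_def)
    next
      case True
      then have xy: "0 < x" "0 < y" by auto
      define P where "P = 1 + x + y + \<alpha> * x * y"
      have Pp: "0 < P" using xy al by (simp add: P_def add_pos_pos)
      have D: "\<alpha> + \<alpha> * x + \<alpha> * y + \<alpha> * \<alpha> * x * y = \<alpha> * P" by (simp add: P_def algebra_simps)
      have u: "P / (y * (\<alpha> * P)) = I y" and v: "P / (x * (\<alpha> * P)) = I x" using Pp al xy by (simp_all add: I_def)
      have HIeq: "HI \<alpha> \<alpha> x y = (I y, I x)"
        unfolding HI_def using D u v by (simp add: P_def mult_ac)
      have J: "P * P / (x^2 * y^2 * (\<alpha> * P) * (\<alpha> * P)) = \<bar>I' x\<bar> * \<bar>I' y\<bar>"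
        using Pp al xy by (simp add: I'_def power2_eq_square field_simps)
      have ID: "gbp_kernel lam b a \<alpha> 1 (P / (y * (\<alpha> * P))) * gbp_kernel (- lam) b a \<alpha> 1 (P / (x * (\<alpha> * P))) * (P * P / (x^2 * y^2 * (\<alpha> * P) * (\<alpha> * P)))
           = gbp_kernel lam a b \<alpha> 1 x * gbp_kernel (- lam) a b \<alpha> 1 y"
        using identity_a[OF al al xy, of lam b a] unfolding D P_def[symmetric] .
      have "\<psi>1 (x, Gc x y) * \<bar>Gc' x y\<bar> = gbp_kernel lam a b \<alpha> 1 x * gbp_kernel (- lam) a b \<alpha> 1 y * indicator C (HI \<alpha> \<alpha> x y)"
      proof -
        have "\<psi>1 (x, Gc x y) * \<bar>Gc' x y\<bar> = gbp_kernel lam b a \<alpha> 1 (I y) * gbp_kernel (- lam) b a \<alpha> 1 (I x) * indicator C (I y, I x) * (\<bar>I' x\<bar> * \<bar>I' y\<bar>)"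
          unfolding \<psi>1_def \<psi>_def Gc_def Gc'_def using xy al by (simp add: Q_def I_def mult_ac)
        also have "\<dots> = gbp_kernel lam a b \<alpha> 1 x * gbp_kernel (- lam) a b \<alpha> 1 y * indicator C (HI \<alpha> \<alpha> x y)"
          unfolding J[symmetric] HIeq ID[unfolded u v, symmetric] by (simp add: mult_ac)
        finally show ?thesis .
      qed
      then show ?thesis using xy by (simp add: z Q_def indicator_def)
    qed
  qed
  finally show ?thesis by simp
qed

lemma part_a:
  fixes M :: "'s measure" and \<alpha> \<beta> lam a b :: real and X Y :: "'s \<Rightarrow> real"
  assumes P: "prob_space M"
    and h: "0 < \<alpha> \<and> 0 < \<beta> \<and> 0 < a \<and> 0 < b \<and>
      - min a b < lam / 2 \<and> lam / 2 < min a b \<and>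
      distributed M lborel X (gbp_density lam a b \<alpha> 1) \<and>
      distributed M lborel Y (gbp_density (- lam) a b \<beta> 1) \<and>
      prob_space.indep_var M borel X borel Y"
  shows "(let U = (\<lambda>\<omega>. fst (HI \<alpha> \<beta> (X \<omega>) (Y \<omega>)));
           V = (\<lambda>\<omega>. snd (HI \<alpha> \<beta> (X \<omega>) (Y \<omega>)))
       in prob_space.indep_var M borel U borel V \<and>
          distributed M lborel U (gbp_density lam b a \<alpha> 1) \<and>
          distributed M lborel V (gbp_density (- lam) b a \<beta> 1))"
proof -
  have al: "0 < \<alpha>" and be: "0 < \<beta>" using h by simp_all
  have T: "(\<lambda>z. HI \<alpha> \<beta> (fst z) (snd z)) \<in> borel_measurable borel"
    unfolding HI_def by measurable
  have "prob_space.indep_var M borel (\<lambda>\<omega>. fst ((\<lambda>z. HI \<alpha> \<beta> (fst z) (snd z)) (X \<omega>, Y \<omega>))) borel (\<lambda>\<omega>. snd ((\<lambda>z. HI \<alpha> \<beta> (fst z) (snd z)) (X \<omega>, Y \<omega>))) \<and>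
         distributed M lborel (\<lambda>\<omega>. fst ((\<lambda>z. HI \<alpha> \<beta> (fst z) (snd z)) (X \<omega>, Y \<omega>))) (\<lambda>x. ennreal (gbp_kernel lam b a \<alpha> 1 x / (\<integral>y. gbp_kernel lam b a \<alpha> 1 y \<partial>lborel))) \<and>
         distributed M lborel (\<lambda>\<omega>. snd ((\<lambda>z. HI \<alpha> \<beta> (fst z) (snd z)) (X \<omega>, Y \<omega>))) (\<lambda>x. ennreal (gbp_kernel (- lam) b a \<beta> 1 x / (\<integral>y. gbp_kernel (- lam) b a \<beta> 1 y \<partial>lborel)))"
  proof (rule glue[OF P])
    show "distributed M lborel X (\<lambda>x. ennreal (gbp_kernel lam a b \<alpha> 1 x / (\<integral>y. gbp_kernel lam a b \<alpha> 1 y \<partial>lborel)))"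
      using h by (simp add: gbp_density_def[abs_def])
    show "distributed M lborel Y (\<lambda>x. ennreal (gbp_kernel (- lam) a b \<beta> 1 x / (\<integral>y. gbp_kernel (- lam) a b \<beta> 1 y \<partial>lborel)))"
      using h by (simp add: gbp_density_def[abs_def])
    show "prob_space.indep_var M borel X borel Y" using h by simp
    fix C :: "(real \<times> real) set" assume C: "C \<in> sets borel"
    show "(\<integral>\<^sup>+z. ennreal (gbp_kernel lam a b \<alpha> 1 (fst z) * gbp_kernel (- lam) a b \<beta> 1 (snd z)) * indicator C ((\<lambda>z. HI \<alpha> \<beta> (fst z) (snd z)) z) \<partial>(lborel \<Otimes>\<^sub>M lborel))
       = (\<integral>\<^sup>+z. ennreal (gbp_kernel lam b a \<alpha> 1 (fst z) * gbp_kernel (- lam) b a \<beta> 1 (snd z)) * indicator C z \<partial>(lborel \<Otimes>\<^sub>M lborel))"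
    proof (cases "\<alpha> = \<beta>")
      case True
      then show ?thesis using key_a_eq[OF al C, of lam a b] by simp
    next
      case False
      then show ?thesis using key_a_neq[OF al be False C, of lam a b] by simp
    qed
  qed (use al be T in \<open>auto intro: gbp_nonneg\<close>)
  then show ?thesis by (simp add: Let_def gbp_density_def[abs_def])
qed

theorem corollary5p2:
  fixes M :: "'s measure"
  assumes "prob_space M"
  shows
   "(\<forall>(\<alpha>::real) (\<beta>::real) (lam::real) (a::real) (b::real) (X::'s \<Rightarrow> real) (Y::'s \<Rightarrow> real).
      0 < \<alpha> \<and> 0 < \<beta> \<and> 0 < a \<and> 0 < b \<and>
      - min a b < lam / 2 \<and> lam / 2 < min a b \<and>
      distributed M lborel X (gbp_density lam a b \<alpha> 1) \<and>
      distributed M lborel Y (gbp_density (- lam) a b \<beta> 1) \<and>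
      prob_space.indep_var M borel X borel Y
      \<longrightarrow>
      (let U = (\<lambda>\<omega>. fst (HI \<alpha> \<beta> (X \<omega>) (Y \<omega>)));
           V = (\<lambda>\<omega>. snd (HI \<alpha> \<beta> (X \<omega>) (Y \<omega>)))
       in prob_space.indep_var M borel U borel V \<and>
          distributed M lborel U (gbp_density lam b a \<alpha> 1) \<and>
          distributed M lborel V (gbp_density (- lam) b a \<beta> 1)))
   \<and>
   (\<forall>(\<delta>::real) (lam::real) (a::real) (b::real) (X::'s \<Rightarrow> real) (Y::'s \<Rightarrow> real).
      0 < \<delta> \<and> 0 < a \<and> 0 < b \<and>
      0 < lam / 2 \<and> lam / 2 < min a b \<and>
      distributed M lborel X (gbp_density lam a b \<delta> 1) \<and>
      distributed M lborel Y (bp_density (b - lam / 2) lam) \<and>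
      prob_space.indep_var M borel X borel Y
      \<longrightarrow>
      (let U = (\<lambda>\<omega>. fst (FBe \<delta> (X \<omega>) (Y \<omega>)));
           V = (\<lambda>\<omega>. snd (FBe \<delta> (X \<omega>) (Y \<omega>)))
       in prob_space.indep_var M borel U borel V \<and>
          distributed M lborel U (gbp_density lam b a \<delta> 1) \<and>
          distributed M lborel V (bp_density (a - lam / 2) lam)))"
  using part_a[OF assms] part_b[OF assms] by blast

end
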